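(* Let $\Gamma$ be a finite normal-form game and let $\vec\sigma$ be a non-degenerate Nash equilibrium of $\Gamma$. Then $\vec\sigma$ is strongly punishable: for every $\epsilon>0$ there exists $\delta>0$ such that for every game $\Gamma'=(P,A,U')$ with $d(\Gamma,\Gamma')<\delta$ there is a Nash equilibrium $\vec\sigma'$ of $\Gamma'$ with $\sigma_i'(A_i)=\sigma_i(A_i)$ for all $i\in P$ and $u_i'(\vec\sigma')-u_i(\vec\sigma)<\epsilon$ for all $i\in P$.
   Context: A finite normal-form game is $\Gamma=(P,A,U)$ with players $P=\{1,\dots,n\}$, action profiles $A=A_1\times\cdots\times A_n$ where $A_i=\{a_i^1,\dots,a_i^{N_i}\}$ is finite, and $U=(u_1,\dots,u_n)$ with $u_i:A\to\mathbb R$. Utilities are extended to mixed strategy profiles by expectation; $\sigma_i^j$ denotes the probability that $\sigma_i$ assigns to $a_i^j$, and $\sigma_i(A_i)$ the support of $\sigma_i$. The distance between games $\Gamma=(P,A,U)$ and $\Gamma'=(P',A',U')$ is $d(\Gamma,\Gamma')=+\infty$ if $P\neq P'$ or $A\neq A'$, and $d(\Gamma,\Gamma')=\max_{i\in P,\vec a\in A}|u_i(\vec a)-u_i'(\vec a)|$ otherwise. Non-degeneracy: let $\vec\sigma$ be a Nash equilibrium with actions labelled so that $\sigma_i(A_i)=\{a_i^1,\dots,a_i^{M_i}\}$. For variables $\vec p=(p_i^k)_{i\in P,\,1\le k\le M_i}$ write $u_i(a,\vec p_{-i}):=\sum u_i(a,(a_j^{k_j})_{j\ne i})\prod_{j\neq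 i}p_j^{k_j}$, the sum over all choices $k_j\le M_j$ ($j\ne i$). The characteristic function $f_{\vec\sigma}:\mathbb R^{\sum_i M_i}\to\mathbb R^{\sum_i M_i}$ has components $\sum_{k=1}^{M_i}p_i^k$ for each $i\in P$, and $u_i(a_i^1,\vec p_{-i})-u_i(a_i^k,\vec p_{-i})$ for each $i\in P$ and $2\le k\le M_i$. The residual function $r_{\vec\sigma}$ has components $u_i(a_i^1,\vec p_{-i})-u_i(a_i^k,\vec p_{-i})$ for each $i\in P$ and $M_i<k\le N_i$. $\vec\sigma$ is non-degenerate if the Jacobian determinant $|Df_{\vec\sigma}(\vec\sigma)|\neq 0$ (evaluating at the vector of probabilities of $\vec\sigma$) and every component of $r_{\vec\sigma}(\vec\sigma)$ is strictly positive. *)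

theory Defs
  imports "HOL-Analysis.Analysis"
begin

text \<open>
  Finite normal-form game: players are 0..<n (i.e. P = {1..n} shifted), player i has
  actions 0..<N i, utilities u i a for pure profiles a (a j < N j for j < n).
\<close>

definition profiles :: "nat \<Rightarrow> (nat \<Rightarrow> nat) \<Rightarrow> (nat \<Rightarrow> nat) set" where
  "profiles n N = PiE {..<n} (\<lambda>i. {..<N i})"

definition eu :: "nat \<Rightarrow> (nat \<Rightarrow> nat) \<Rightarrow> (nat \<Rightarrow> (nat \<Rightarrow> nat) \<Rightarrow> real)
                  \<Rightarrow> nat \<Rightarrow> (nat \<Rightarrow> nat \<Rightarrow> real) \<Rightarrow> real" where
  "eu n N u i \<sigma> = (\<Sum>a\<in>profiles n N. u i a * (\<Prod>j<n. \<sigma> j (a j)))"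

definition mixed :: "(nat \<Rightarrow> nat) \<Rightarrow> nat \<Rightarrow> (nat \<Rightarrow> real) \<Rightarrow> bool" where
  "mixed N i \<tau> \<longleftrightarrow> (\<forall>k<N i. 0 \<le> \<tau> k) \<and> (\<Sum>k<N i. \<tau> k) = 1"

definition nash :: "nat \<Rightarrow> (nat \<Rightarrow> nat) \<Rightarrow> (nat \<Rightarrow> (nat \<Rightarrow> nat) \<Rightarrow> real)
                    \<Rightarrow> (nat \<Rightarrow> nat \<Rightarrow> real) \<Rightarrow> bool" where
  "nash n N u \<sigma> \<longleftrightarrow> (\<forall>i<n. mixed N i (\<sigma> i)) \<and>
     (\<forall>i<n. \<forall>\<tau>. mixed N i \<tau> \<longrightarrow> eu n N u i (\<sigma>(i := \<tau>)) \<le> eu n N u i \<sigma>)"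

definition support :: "(nat \<Rightarrow> nat) \<Rightarrow> (nat \<Rightarrow> nat \<Rightarrow> real) \<Rightarrow> nat \<Rightarrow> nat set" where
  "support N \<sigma> i = {k. k < N i \<and> \<sigma> i k \<noteq> 0}"

definition game_dist :: "nat \<Rightarrow> (nat \<Rightarrow> nat) \<Rightarrow> (nat \<Rightarrow> (nat \<Rightarrow> nat) \<Rightarrow> real)
                          \<Rightarrow> (nat \<Rightarrow> (nat \<Rightarrow> nat) \<Rightarrow> real) \<Rightarrow> real" where
  "game_dist n N u u' = Max ((\<lambda>(i, a). \<bar>u i a - u' i a\<bar>) ` ({..<n} \<times> profiles n N))"

text \<open>u_i(a, p_{-i}): variables p (j,k) for k in the support S j.\<close>
definition upart :: "nat \<Rightarrow> (nat \<Rightarrow> nat set) \<Rightarrow> (nat \<Rightarrow> (nat \<Rightarrow> nat) \<Rightarrow> real)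
                     \<Rightarrow> nat \<Rightarrow> nat \<Rightarrow> (nat \<times> nat \<Rightarrow> real) \<Rightarrow> real" where
  "upart n S u i a p = (\<Sum>b\<in>PiE {..<n} (\<lambda>j. if j = i then {a} else S j).
       u i b * (\<Prod>j\<in>{..<n} - {i}. p (j, b j)))"

text \<open>Labelling: a_i^1 is the least action in the support.\<close>
definition ref_act :: "(nat \<Rightarrow> nat set) \<Rightarrow> nat \<Rightarrow> nat" where
  "ref_act S i = Min (S i)"

definition var_idx :: "nat \<Rightarrow> (nat \<Rightarrow> nat set) \<Rightarrow> (nat \<times> nat) set" where
  "var_idx n S = {(i, k). i < n \<and> k \<in> S i}"

definition charf :: "nat \<Rightarrow> (nat \<Rightarrow> nat set) \<Rightarrow> (nat \<Rightarrow> (nat \<Rightarrow> nat) \<Rightarrow> real)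
                     \<Rightarrow> (nat \<times> nat \<Rightarrow> real) \<Rightarrow> nat \<times> nat \<Rightarrow> real" where
  "charf n S u p c = (case c of (i, k) \<Rightarrow>
     if k = ref_act S i then (\<Sum>l\<in>S i. p (i, l))
     else upart n S u i (ref_act S i) p - upart n S u i k p)"

definition det_on :: "'a set \<Rightarrow> ('a \<Rightarrow> 'a \<Rightarrow> real) \<Rightarrow> real" where
  "det_on I M = (\<Sum>\<pi> \<in> {\<pi>. \<pi> permutes I}. of_int (sign \<pi>) * (\<Prod>x\<in>I. M x (\<pi> x)))"

definition nondegenerate :: "nat \<Rightarrow> (nat \<Rightarrow> nat) \<Rightarrow> (nat \<Rightarrow> (nat \<Rightarrow> nat) \<Rightarrow> real)
                             \<Rightarrow> (nat \<Rightarrow> nat \<Rightarrow> real) \<Rightarrow> bool" where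
  "nondegenerate n N u \<sigma> \<longleftrightarrow>
     (let S = support N \<sigma>; I = var_idx n S; p0 = (\<lambda>(j, l). \<sigma> j l) in
       det_on I (\<lambda>c v. deriv (\<lambda>t. charf n S u (p0(v := t)) c) (p0 v)) \<noteq> 0 \<and>
       (\<forall>i<n. \<forall>k<N i. k \<notin> S i \<longrightarrow>
          upart n S u i (ref_act S i) p0 - upart n S u i k p0 > 0))"

end

theory Submission
  imports Defs "Jordan_Normal_Form.Determinant"
begin

lemma prod_abs_le:
  fixes a :: "'x \<Rightarrow> real"
  assumes "\<forall>j\<in>J. \<bar>a j\<bar> \<le> B"
  shows "\<bar>prod a J\<bar> \<le> B ^ card J"
proof (cases "finite J")
  case True
  have "\<bar>prod a J\<bar> = prod (\<lambda>j. \<bar>a j\<bar>) J" by (simp add: abs_prod)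
  also have "\<dots> \<le> prod (\<lambda>j. B) J" by (rule prod_mono) (use assms in auto)
  finally show ?thesis by simp
next
  case False then show ?thesis by simp
qed

lemma prod_diff_bound:
  fixes a b :: "'x \<Rightarrow> real"
  assumes "finite J" "\<forall>j\<in>J. \<bar>a j\<bar> \<le> B" "\<forall>j\<in>J. \<bar>b j\<bar> \<le> B" "1 \<le> B"
    "\<forall>j\<in>J. \<bar>a j - b j\<bar> \<le> d"
  shows "\<bar>prod a J - prod b J\<bar> \<le> real (card J) * B ^ card J * d"
  using assms
proof (induction J rule: finite_induct)
  case empty then show ?case by simp
next
  case (insert x J)
  let ?k = "card J"
  have IH: "\<bar>prod a J - prod b J\<bar> \<le> real ?k * B ^ ?k * d" using insert by auto
  have pa: "\<bar>prod a J\<bar> \<le> B ^ ?k" using insert by (intro prod_abs_le) auto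
  have dx: "\<bar>a x - b x\<bar> \<le> d" and bx: "\<bar>b x\<bar> \<le> B" using insert by auto
  have d0: "0 \<le> d" using dx by linarith
  have B0: "0 \<le> B" using insert by linarith
  have eq: "prod a (insert x J) - prod b (insert x J) = (a x - b x) * prod a J + b x * (prod a J - prod b J)"
    using insert by (simp add: algebra_simps)
  have "\<bar>(a x - b x) * prod a J\<bar> \<le> d * B ^ ?k"
    unfolding abs_mult by (rule mult_mono) (use dx pa d0 in auto)
  moreover have "\<bar>b x * (prod a J - prod b J)\<bar> \<le> B * (real ?k * B ^ ?k * d)"
    unfolding abs_mult by (rule mult_mono) (use bx IH B0 in auto)
  moreover have "d * B ^ ?k \<le> d * B ^ Suc ?k"
    using d0 insert(6) by (intro mult_left_mono) (auto intro: power_increasing)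
  ultimately have "\<bar>prod a (insert x J) - prod b (insert x J)\<bar> \<le> d * B ^ Suc ?k + B * (real ?k * B ^ ?k * d)"
    unfolding eq by linarith
  also have "\<dots> = real (card (insert x J)) * B ^ card (insert x J) * d"
    using insert by (simp add: algebra_simps)
  finally show ?case .
qed

lemma prod_second_order:
  fixes a b c :: "'x \<Rightarrow> real"
  assumes "finite J" "\<forall>j\<in>J. \<bar>a j\<bar> \<le> B" "\<forall>j\<in>J. \<bar>b j\<bar> \<le> B" "\<forall>j\<in>J. \<bar>c j\<bar> \<le> B" "1 \<le> B"
    "\<forall>j\<in>J. \<bar>a j - c j\<bar> \<le> r" "\<forall>j\<in>J. \<bar>b j - c j\<bar> \<le> r" "\<forall>j\<in>J. \<bar>a j - b j\<bar> \<le> d"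
  shows "\<bar>prod a J - prod b J - (\<Sum>j\<in>J. (a j - b j) * prod c (J - {j}))\<bar>
           \<le> 2 * real (card J)^2 * B ^ card J * r * d"
  using assms
proof (induction J rule: finite_induct)
  case empty then show ?case by simp
next
  case (insert x J)
  let ?k = "card J"
  let ?S = "\<Sum>j\<in>J. (a j - b j) * prod c (J - {j})"
  have IH: "\<bar>prod a J - prod b J - ?S\<bar> \<le> 2 * real ?k ^ 2 * B ^ ?k * r * d" using insert by auto
  have dx: "\<bar>a x - b x\<bar> \<le> d" and ax: "\<bar>a x\<bar> \<le> B" and rx: "\<bar>a x - c x\<bar> \<le> r" using insert by auto
  have d0: "0 \<le> d" using dx by linarith
  have r0: "0 \<le> r" using rx by linarith
  have B0: "0 \<le> B" using insert by linarith
  have B1: "1 \<le> B" using insert by auto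
  have bc: "\<bar>prod b J - prod c J\<bar> \<le> real ?k * B ^ ?k * r"
    using insert by (intro prod_diff_bound) auto
  have Sb: "\<bar>?S\<bar> \<le> real ?k * (d * B ^ ?k)"
  proof -
    have "\<bar>?S\<bar> \<le> (\<Sum>j\<in>J. \<bar>(a j - b j) * prod c (J - {j})\<bar>)" by (rule sum_abs)
    also have "\<dots> \<le> (\<Sum>j\<in>J. d * B ^ ?k)"
    proof (rule sum_mono)
      fix j assume j: "j \<in> J"
      have "\<bar>prod c (J - {j})\<bar> \<le> B ^ card (J - {j})" using insert by (intro prod_abs_le) auto
      also have "\<dots> \<le> B ^ ?k" using B1 insert(1) by (intro power_increasing) (auto simp: card_Diff1_le)
      finally have "\<bar>prod c (J - {j})\<bar> \<le> B ^ ?k" .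
      then show "\<bar>(a j - b j) * prod c (J - {j})\<bar> \<le> d * B ^ ?k"
        unfolding abs_mult using insert j d0 by (intro mult_mono) auto
    qed
    finally show ?thesis by simp
  qed
  have sumeq: "(\<Sum>j\<in>insert x J. (a j - b j) * prod c (insert x J - {j}))
      = (a x - b x) * prod c J + c x * ?S"
  proof -
    have "(\<Sum>j\<in>insert x J. (a j - b j) * prod c (insert x J - {j}))
        = (a x - b x) * prod c (insert x J - {x}) + (\<Sum>j\<in>J. (a j - b j) * prod c (insert x J - {j}))"
      using insert by (simp add: sum.insert)
    also have "insert x J - {x} = J" using insert by auto
    also have "(\<Sum>j\<in>J. (a j - b j) * prod c (insert x J - {j})) = (\<Sum>j\<in>J. c x * ((a j - b j) * prod c (J - {j})))"
    proof (rule sum.cong)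
      fix j assume "j \<in> J"
      then have "insert x J - {j} = insert x (J - {j})" using insert by auto
      then show "(a j - b j) * prod c (insert x J - {j}) = c x * ((a j - b j) * prod c (J - {j}))"
        using insert by (simp add: prod.insert)
    qed simp
    finally show ?thesis by (simp add: sum_distrib_left)
  qed
  have eq: "prod a (insert x J) - prod b (insert x J) - (\<Sum>j\<in>insert x J. (a j - b j) * prod c (insert x J - {j}))
     = a x * (prod a J - prod b J - ?S) + (a x - c x) * ?S + (a x - b x) * (prod b J - prod c J)"
    unfolding sumeq using insert by (simp add: algebra_simps)
  have t1: "\<bar>a x * (prod a J - prod b J - ?S)\<bar> \<le> B * (2 * real ?k ^ 2 * B ^ ?k * r * d)"
    unfolding abs_mult by (rule mult_mono) (use ax IH B0 in auto)
  have t2: "\<bar>(a x - c x) * ?S\<bar> \<le> r * (real ?k * (d * B ^ ?k))"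
    unfolding abs_mult by (rule mult_mono) (use rx Sb r0 in auto)
  have t3: "\<bar>(a x - b x) * (prod b J - prod c J)\<bar> \<le> d * (real ?k * B ^ ?k * r)"
    unfolding abs_mult by (rule mult_mono) (use dx bc d0 in auto)
  have pos: "0 \<le> real ?k * B ^ ?k * r * d" using r0 d0 B0 by simp
  have mono: "real ?k * B ^ ?k * r * d \<le> real ?k * B ^ Suc ?k * r * d"
  proof -
    have "B ^ ?k \<le> B ^ Suc ?k" using B1 by (intro power_increasing) auto
    then show ?thesis using r0 d0 by (intro mult_right_mono mult_left_mono) auto
  qed
  have "\<bar>prod a (insert x J) - prod b (insert x J) - (\<Sum>j\<in>insert x J. (a j - b j) * prod c (insert x J - {j}))\<bar>
     \<le> B * (2 * real ?k ^ 2 * B ^ ?k * r * d) + 2 * (real ?k * B ^ ?k * r * d)"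
    unfolding eq using t1 t2 t3 by (simp add: algebra_simps)
  also have "\<dots> \<le> 2 * real ?k ^ 2 * B ^ Suc ?k * r * d + 2 * (real ?k * B ^ Suc ?k * r * d)"
    using mono by (simp add: algebra_simps)
  also have "\<dots> \<le> 2 * real (Suc ?k) ^ 2 * B ^ Suc ?k * r * d"
  proof -
    have "0 \<le> B ^ Suc ?k * r * d" using B0 r0 d0 by simp
    then have "(2 * real ?k ^ 2 + 2 * real ?k) * (B ^ Suc ?k * r * d) \<le> (2 * real (Suc ?k) ^ 2) * (B ^ Suc ?k * r * d)"
      by (intro mult_right_mono) (auto simp: power2_eq_square algebra_simps)
    then show ?thesis by (simp add: algebra_simps)
  qed
  finally show ?case using insert by simp
qed

definition mnm :: "nat set \<Rightarrow> (nat \<Rightarrow> nat) \<Rightarrow> (nat \<times> nat \<Rightarrow> real) \<Rightarrow> real" where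
  "mnm J b p = (\<Prod>j\<in>J. p (j, b j))"

definition dmono :: "nat set \<Rightarrow> (nat \<Rightarrow> nat) \<Rightarrow> (nat \<times> nat \<Rightarrow> real) \<Rightarrow> nat \<times> nat \<Rightarrow> real" where
  "dmono J b p v = (if fst v \<in> J \<and> snd v = b (fst v) then (\<Prod>j\<in>J - {fst v}. p (j, b j)) else 0)"

definition PB :: "nat \<Rightarrow> (nat \<Rightarrow> nat set) \<Rightarrow> nat \<Rightarrow> nat \<Rightarrow> (nat \<Rightarrow> nat) set" where
  "PB n S i a = PiE {..<n} (\<lambda>j. if j = i then {a} else S j)"

definition dupart :: "nat \<Rightarrow> (nat \<Rightarrow> nat set) \<Rightarrow> (nat \<Rightarrow> (nat \<Rightarrow> nat) \<Rightarrow> real)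
                     \<Rightarrow> nat \<Rightarrow> nat \<Rightarrow> (nat \<times> nat \<Rightarrow> real) \<Rightarrow> nat \<times> nat \<Rightarrow> real" where
  "dupart n S w i a p v = (\<Sum>b\<in>PB n S i a. w i b * dmono ({..<n} - {i}) b p v)"

definition dcharf :: "nat \<Rightarrow> (nat \<Rightarrow> nat set) \<Rightarrow> (nat \<Rightarrow> (nat \<Rightarrow> nat) \<Rightarrow> real)
                     \<Rightarrow> (nat \<times> nat \<Rightarrow> real) \<Rightarrow> nat \<times> nat \<Rightarrow> nat \<times> nat \<Rightarrow> real" where
  "dcharf n S w p c v = (case c of (i, k) \<Rightarrow>
     if k = ref_act S i then (if fst v = i \<and> snd v \<in> S i then 1 else 0)
     else dupart n S w i (ref_act S i) p v - dupart n S w i k p v)"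

lemma upart_alt: "upart n S w i a p = (\<Sum>b\<in>PB n S i a. w i b * mnm ({..<n} - {i}) b p)"
  unfolding upart_def PB_def mnm_def ..

lemma mnm_upd:
  assumes "finite J"
  shows "mnm J b (p(v := t)) = mnm J b p + (t - p v) * dmono J b p v"
proof (cases "fst v \<in> J \<and> snd v = b (fst v)")
  case True
  define j0 where "j0 = fst v"
  have v: "v = (j0, b j0)" using True unfolding j0_def by (cases v) auto
  have J: "j0 \<in> J" using True unfolding j0_def by auto
  have "mnm J b (p(v := t)) = t * (\<Prod>j\<in>J - {j0}. (p(v := t)) (j, b j))"
    unfolding mnm_def by (subst prod.remove[OF assms J]) (simp add: v)
  also have "(\<Prod>j\<in>J - {j0}. (p(v := t)) (j, b j)) = (\<Prod>j\<in>J - {j0}. p (j, b j))"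
    by (rule prod.cong) (auto simp: v)
  finally have 1: "mnm J b (p(v := t)) = t * (\<Prod>j\<in>J - {j0}. p (j, b j))" .
  have "mnm J b p = p v * (\<Prod>j\<in>J - {j0}. p (j, b j))"
    unfolding mnm_def by (subst prod.remove[OF assms J]) (simp add: v)
  with 1 show ?thesis using True unfolding dmono_def j0_def by (simp add: algebra_simps)
next
  case False
  have "mnm J b (p(v := t)) = mnm J b p"
    unfolding mnm_def by (rule prod.cong) (use False in auto)
  then show ?thesis using False unfolding dmono_def by auto
qed

lemma upart_upd:
  "upart n S w i a (p(v := t)) = upart n S w i a p + (t - p v) * dupart n S w i a p v"
proof (cases "finite (PB n S i a)")
  case True
  have "upart n S w i a (p(v := t)) = (\<Sum>b\<in>PB n S i a. w i b * mnm ({..<n} - {i}) b p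
       + (t - p v) * (w i b * dmono ({..<n} - {i}) b p v))"
    unfolding upart_alt by (rule sum.cong) (auto simp: mnm_upd algebra_simps)
  then show ?thesis unfolding upart_alt dupart_def by (simp add: sum.distrib sum_distrib_left)
next
  case False then show ?thesis unfolding upart_alt dupart_def by simp
qed

lemma charf_upd:
  assumes "finite (S (fst c))"
  shows "charf n S w (p(v := t)) c = charf n S w p c + (t - p v) * dcharf n S w p c v"
proof -
  obtain i k where c: "c = (i, k)" by (cases c)
  show ?thesis
  proof (cases "k = ref_act S i")
    case True
    have fin: "finite (S i)" using assms c by simp
    show ?thesis
    proof (cases "fst v = i \<and> snd v \<in> S i")
      case True2: True
      have v: "v = (i, snd v)" using True2 by (cases v) auto
      have "(\<Sum>l\<in>S i. (p(v := t)) (i, l)) = (\<Sum>l\<in>S i. p (i, l) + (if l = snd v then t - p v else 0))"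
        by (rule sum.cong) (auto, (metis v)+)
      also have "\<dots> = (\<Sum>l\<in>S i. p (i, l)) + (t - p v)"
        using fin True2 by (simp add: sum.distrib)
      finally show ?thesis using True True2 c unfolding charf_def dcharf_def by simp
    next
      case False
      have "(\<Sum>l\<in>S i. (p(v := t)) (i, l)) = (\<Sum>l\<in>S i. p (i, l))"
        by (rule sum.cong) (use False in auto)
      then show ?thesis using True False c unfolding charf_def dcharf_def by auto
    qed
  next
    case False
    then show ?thesis using c unfolding charf_def dcharf_def by (simp add: upart_upd algebra_simps)
  qed
qed

lemma deriv_charf:
  assumes "finite (S (fst c))"
  shows "deriv (\<lambda>t. charf n S w (p(v := t)) c) (p v) = dcharf n S w p c v"
proof -
  have "((\<lambda>t. charf n S w p c + (t - p v) * dcharf n S w p c v) has_real_derivative dcharf n S w p c v) (at (p v))"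
    by (auto intro!: derivative_eq_intros)
  then have "((\<lambda>t. charf n S w (p(v := t)) c) has_real_derivative dcharf n S w p c v) (at (p v))"
    using charf_upd[of S c n w p v] assms by simp
  then show ?thesis by (rule DERIV_imp_deriv)
qed

lemma sum_dmono:
  assumes "finite I" "finite J" "\<forall>j\<in>J. (j, b j) \<in> I"
  shows "(\<Sum>v\<in>I. h v * dmono J b q v) = (\<Sum>j\<in>J. h (j, b j) * (\<Prod>k\<in>J - {j}. q (k, b k)))"
proof -
  let ?g = "\<lambda>j. (j, b j)"
  have "(\<Sum>v\<in>I. h v * dmono J b q v) = (\<Sum>v\<in>?g ` J. h v * dmono J b q v)"
    by (rule sum.mono_neutral_right) (use assms in \<open>auto simp: dmono_def\<close>)
  also have "\<dots> = (\<Sum>j\<in>J. h (j, b j) * dmono J b q (j, b j))"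
    by (subst sum.reindex) (auto simp: inj_on_def)
  also have "\<dots> = (\<Sum>j\<in>J. h (j, b j) * (\<Prod>k\<in>J - {j}. q (k, b k)))"
    by (rule sum.cong) (auto simp: dmono_def)
  finally show ?thesis .
qed

lemma contraction_fix:
  fixes T :: "('a \<Rightarrow> real) \<Rightarrow> ('a \<Rightarrow> real)" and z :: "'a \<Rightarrow> real"
  assumes fin: "finite I" and r0: "0 \<le> r"
    and X_def: "X = {p. (\<Sum>c\<in>I. \<bar>p c - z c\<bar>) \<le> r \<and> (\<forall>c. c \<notin> I \<longrightarrow> p c = z c)}"
    and maps: "\<forall>p\<in>X. T p \<in> X"
    and contr: "\<forall>p\<in>X. \<forall>q\<in>X. (\<Sum>c\<in>I. \<bar>T p c - T q c\<bar>) \<le> 1/2 * (\<Sum>c\<in>I. \<bar>p c - q c\<bar>)"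
  shows "\<exists>p\<in>X. T p = p"
proof -
  define nr where "nr p q = (\<Sum>c\<in>I. \<bar>p c - q c\<bar>)" for p q :: "'a \<Rightarrow> real"
  have zX: "z \<in> X" using r0 unfolding X_def by simp
  define x where "x k = (T ^^ k) z" for k
  have xX: "x k \<in> X" for k
    by (induction k) (use zX maps in \<open>auto simp: x_def\<close>)
  have xS: "x (Suc k) = T (x k)" for k by (simp add: x_def)
  define D0 where "D0 = nr (x 1) (x 0)"
  have Dk: "nr (x (Suc k)) (x k) \<le> (1/2)^k * D0" for k
  proof (induction k)
    case 0 then show ?case by (simp add: D0_def)
  next
    case (Suc k)
    have "nr (x (Suc (Suc k))) (x (Suc k)) \<le> 1/2 * nr (x (Suc k)) (x k)"
      using contr[rule_format, OF xX[of "Suc k"] xX[of k]] unfolding nr_def xS[symmetric] .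
    also have "\<dots> \<le> 1/2 * ((1/2)^k * D0)" using Suc by simp
    finally show ?case by simp
  qed
  have coord: "\<bar>p c - q c\<bar> \<le> nr p q" if "c \<in> I" for p q c
    unfolding nr_def by (rule member_le_sum) (use that fin in auto)
  have conv: "\<exists>L. (\<lambda>k. x k c) \<longlonglongrightarrow> L" if c: "c \<in> I" for c
  proof -
    have sm: "summable (\<lambda>k. x (Suc k) c - x k c)"
    proof (rule summable_comparison_test)
      show "\<exists>N. \<forall>k\<ge>N. norm (x (Suc k) c - x k c) \<le> (1/2)^k * D0"
      proof (intro exI allI impI)
        fix k
        show "norm (x (Suc k) c - x k c) \<le> (1/2)^k * D0"
          using coord[OF c, of "x (Suc k)" "x k"] Dk[of k] by simp
      qed
      show "summable (\<lambda>k. (1/2::real)^k * D0)"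
        by (intro summable_mult2 summable_geometric) auto
    qed
    have "(\<lambda>k. \<Sum>j<k. x (Suc j) c - x j c) \<longlonglongrightarrow> (\<Sum>j. x (Suc j) c - x j c)"
      using sm by (rule summable_LIMSEQ)
    then have "(\<lambda>k. x 0 c + (\<Sum>j<k. x (Suc j) c - x j c)) \<longlonglongrightarrow> x 0 c + (\<Sum>j. x (Suc j) c - x j c)"
      by (intro tendsto_add) auto
    moreover have "x 0 c + (\<Sum>j<k. x (Suc j) c - x j c) = x k c" for k
      by (induction k) auto
    ultimately show ?thesis by auto
  qed
  define ps where "ps c = (if c \<in> I then lim (\<lambda>k. x k c) else z c)" for c
  have lim_ps: "(\<lambda>k. x k c) \<longlonglongrightarrow> ps c" for c
  proof (cases "c \<in> I")
    case True then show ?thesis using conv[OF True] unfolding ps_def by (auto simp: limI)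
  next
    case False
    have "x k c = z c" for k using xX[of k] False unfolding X_def by auto
    then show ?thesis using False unfolding ps_def by simp
  qed
  have nr_lim: "(\<lambda>k. nr (x k) q) \<longlonglongrightarrow> nr ps q" for q
    unfolding nr_def by (intro tendsto_intros lim_ps)
  have psX: "ps \<in> X"
  proof -
    have "nr ps z \<le> r"
      by (rule LIMSEQ_le_const2[OF nr_lim]) (use xX in \<open>auto simp: X_def nr_def\<close>)
    moreover have "\<forall>c. c \<notin> I \<longrightarrow> ps c = z c" unfolding ps_def by simp
    ultimately show ?thesis unfolding X_def nr_def by simp
  qed
  have g0: "(\<lambda>k. nr ps (x k)) \<longlonglongrightarrow> 0"
  proof -
    have "(\<lambda>k. nr ps (x k)) \<longlonglongrightarrow> nr ps ps"
      unfolding nr_def by (intro tendsto_intros lim_ps)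
    then show ?thesis by (simp add: nr_def)
  qed
  have "T ps c = ps c" for c
  proof (cases "c \<in> I")
    case True
    have "(\<lambda>k. x (Suc k) c - T ps c) \<longlonglongrightarrow> 0"
    proof (rule Lim_null_comparison)
      show "\<forall>\<^sub>F k in sequentially. norm (x (Suc k) c - T ps c) \<le> 1/2 * nr ps (x k)"
      proof (intro always_eventually allI)
        fix k
        have "\<bar>T (x k) c - T ps c\<bar> \<le> nr (T (x k)) (T ps)" by (rule coord[OF True])
        also have "\<dots> \<le> 1/2 * nr (x k) ps" using contr[rule_format, OF xX[of k] psX] unfolding nr_def .
        also have "nr (x k) ps = nr ps (x k)" unfolding nr_def by (simp add: abs_minus_commute)
        finally show "norm (x (Suc k) c - T ps c) \<le> 1/2 * nr ps (x k)" by (simp add: xS)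
      qed
      show "(\<lambda>k. 1/2 * nr ps (x k)) \<longlonglongrightarrow> 0" using tendsto_mult_left[OF g0, of "1/2"] by simp
    qed
    then have "(\<lambda>k. x (Suc k) c) \<longlonglongrightarrow> T ps c" by (rule LIM_zero_cancel)
    moreover have "(\<lambda>k. x (Suc k) c) \<longlonglongrightarrow> ps c" using lim_ps[of c] by (rule LIMSEQ_Suc)
    ultimately show ?thesis by (rule LIMSEQ_unique)
  next
    case False
    have "T ps \<in> X" using maps psX by blast
    then show ?thesis using False psX unfolding X_def by auto
  qed
  then show ?thesis using psX by auto
qed

lemma det_on_transfer:
  fixes L :: "'a \<Rightarrow> 'a \<Rightarrow> real"
  assumes e: "bij_betw e {0..<m} I"
  shows "Determinant.det (mat m m (\<lambda>(x, y). L (e x) (e y))) = det_on I L"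
proof -
  let ?A = "mat m m (\<lambda>(x, y). L (e x) (e y))"
  let ?e' = "inv_into {0..<m} e"
  have e': "bij_betw ?e' I {0..<m}" using e by (rule bij_betw_inv_into)
  have inj: "inj_on e {0..<m}" using e by (auto simp: bij_betw_def)
  have "Determinant.det ?A = (\<Sum>p\<in>{p. p permutes {0..<m}}. of_int (sign p) * (\<Prod>i=0..<m. ?A $$ (i, p i)))"
    by (subst det_def') auto
  also have "\<dots> = (\<Sum>\<pi>\<in>{\<pi>. \<pi> permutes I}. of_int (sign \<pi>) * (\<Prod>x\<in>I. L x (\<pi> x)))"
  proof (rule sum.reindex_bij_witness[where j = "map_permutation {0..<m} e" and i = "map_permutation I ?e'"])
    fix p assume p: "p \<in> {p. p permutes {0..<m}}"
    then have pp: "p permutes {0..<m}" by simp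
    show "map_permutation I ?e' (map_permutation {0..<m} e p) = p"
      by (rule map_permutation_compose_inv[OF e pp]) (use inj in auto)
    show "map_permutation {0..<m} e p \<in> {\<pi>. \<pi> permutes I}"
      using map_permutation_permutes[OF e pp] by simp
    have "sign (map_permutation {0..<m} e p) = sign p"
      by (rule sign_map_permutation[OF inj pp]) simp
    moreover have "(\<Prod>x\<in>I. L x (map_permutation {0..<m} e p x)) = (\<Prod>i=0..<m. ?A $$ (i, p i))"
    proof -
      have "I = e ` {0..<m}" using e by (auto simp: bij_betw_def)
      then have "(\<Prod>x\<in>I. L x (map_permutation {0..<m} e p x))
          = (\<Prod>i\<in>{0..<m}. L (e i) (map_permutation {0..<m} e p (e i)))"
        using prod.reindex[OF inj] by simp
      also have "\<dots> = (\<Prod>i=0..<m. ?A $$ (i, p i))"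
      proof (rule prod.cong)
        fix i assume i: "i \<in> {0..<m}"
        have "p i \<in> {0..<m}" using pp i by (simp add: permutes_in_image)
        then show "L (e i) (map_permutation {0..<m} e p (e i)) = ?A $$ (i, p i)"
          using i by (simp add: map_permutation_apply[OF inj i])
      qed simp
      finally show ?thesis .
    qed
    ultimately show "of_int (sign (map_permutation {0..<m} e p)) * (\<Prod>x\<in>I. L x (map_permutation {0..<m} e p x))
        = of_int (sign p) * (\<Prod>i=0..<m. ?A $$ (i, p i))" by simp
  next
    fix \<pi> assume q: "\<pi> \<in> {\<pi>. \<pi> permutes I}"
    then have qq: "\<pi> permutes I" by simp
    show "map_permutation {0..<m} e (map_permutation I ?e' \<pi>) = \<pi>"
      by (rule map_permutation_compose_inv[OF e' qq]) (use e in \<open>auto simp: bij_betw_def f_inv_into_f\<close>)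
    show "map_permutation I ?e' \<pi> \<in> {p. p permutes {0..<m}}"
      using map_permutation_permutes[OF e' qq] by simp
  qed
  finally show ?thesis unfolding det_on_def by simp
qed

lemma det_on_inverse:
  fixes L :: "'a \<Rightarrow> 'a \<Rightarrow> real"
  assumes fin: "finite I" and det: "det_on I L \<noteq> 0"
  shows "\<exists>M. (\<forall>c\<in>I. \<forall>d\<in>I. (\<Sum>v\<in>I. L c v * M v d) = (if c = d then 1 else 0)) \<and>
             (\<forall>c\<in>I. \<forall>d\<in>I. (\<Sum>v\<in>I. M c v * L v d) = (if c = d then 1 else 0))"
proof -
  define m where "m = card I"
  obtain e where e: "bij_betw e {0..<m} I" using ex_bij_betw_nat_finite[OF fin] unfolding m_def by blast
  let ?A = "mat m m (\<lambda>(x, y). L (e x) (e y))"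
  let ?e' = "inv_into {0..<m} e"
  have inj: "inj_on e {0..<m}" using e by (auto simp: bij_betw_def)
  have Ie: "I = e ` {0..<m}" using e by (auto simp: bij_betw_def)
  have A: "?A \<in> carrier_mat m m" by simp
  have dA: "Determinant.det ?A \<noteq> 0" using det det_on_transfer[OF e, of L] by simp
  obtain B where B: "B \<in> carrier_mat m m" "?A * B = 1\<^sub>m m" "B * ?A = 1\<^sub>m m"
    using det_non_zero_imp_unit[OF A dA, of "0::nat"] unfolding Units_def ring_mat_def by auto
  define M where "M c d = B $$ (?e' c, ?e' d)" for c d
  have e'e: "?e' (e x) = x" if "x \<in> {0..<m}" for x using inj that by simp
  have e'I: "?e' c \<in> {0..<m}" "e (?e' c) = c" if "c \<in> I" for c
    using that e by (auto simp: bij_betw_def Ie inv_into_into f_inv_into_f)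
  have AB: "(\<Sum>y\<in>{0..<m}. ?A $$ (x, y) * B $$ (y, z)) = (if x = z then 1 else 0)"
    if "x < m" "z < m" for x z
  proof -
    have "(?A * B) $$ (x, z) = (\<Sum>y\<in>{0..<m}. ?A $$ (x, y) * B $$ (y, z))"
      using that B(1) by (simp add: scalar_prod_def)
    then show ?thesis using B(2) that by simp
  qed
  have BA: "(\<Sum>y\<in>{0..<m}. B $$ (x, y) * ?A $$ (y, z)) = (if x = z then 1 else 0)"
    if "x < m" "z < m" for x z
  proof -
    have "(B * ?A) $$ (x, z) = (\<Sum>y\<in>{0..<m}. B $$ (x, y) * ?A $$ (y, z))"
      using that B(1) by (simp add: scalar_prod_def)
    then show ?thesis using B(3) that by simp
  qed
  have sumI: "(\<Sum>v\<in>I. g v) = (\<Sum>y\<in>{0..<m}. g (e y))" for g :: "'a \<Rightarrow> real"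
    unfolding Ie by (rule sum.reindex[OF inj, unfolded comp_def])
  show ?thesis
  proof (intro exI[of _ M] conjI ballI)
    fix c d assume c: "c \<in> I" and d: "d \<in> I"
    have "(\<Sum>v\<in>I. L c v * M v d) = (\<Sum>y\<in>{0..<m}. ?A $$ (?e' c, y) * B $$ (y, ?e' d))"
      unfolding sumI M_def
    proof (rule sum.cong)
      fix y assume y: "y \<in> {0..<m}"
      have "?A $$ (?e' c, y) = L c (e y)" using y e'I[OF c] by simp
      then show "L c (e y) * B $$ (?e' (e y), ?e' d) = ?A $$ (?e' c, y) * B $$ (y, ?e' d)"
        using e'e[OF y] by simp
    qed simp
    also have "\<dots> = (if ?e' c = ?e' d then 1 else 0)"
      using AB[of "?e' c" "?e' d"] e'I[OF c] e'I[OF d] by simp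
    also have "(?e' c = ?e' d) = (c = d)" using e'I[OF c] e'I[OF d] by metis
    finally show "(\<Sum>v\<in>I. L c v * M v d) = (if c = d then 1 else 0)" .
  next
    fix c d assume c: "c \<in> I" and d: "d \<in> I"
    have "(\<Sum>v\<in>I. M c v * L v d) = (\<Sum>y\<in>{0..<m}. B $$ (?e' c, y) * ?A $$ (y, ?e' d))"
      unfolding sumI M_def
    proof (rule sum.cong)
      fix y assume y: "y \<in> {0..<m}"
      have "?A $$ (y, ?e' d) = L (e y) d" using y e'I[OF d] by simp
      then show "B $$ (?e' c, ?e' (e y)) * L (e y) d = B $$ (?e' c, y) * ?A $$ (y, ?e' d)"
        using e'e[OF y] by simp
    qed simp
    also have "\<dots> = (if ?e' c = ?e' d then 1 else 0)"
      using BA[of "?e' c" "?e' d"] e'I[OF c] e'I[OF d] by simp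
    also have "(?e' c = ?e' d) = (c = d)" using e'I[OF c] e'I[OF d] by metis
    finally show "(\<Sum>v\<in>I. M c v * L v d) = (if c = d then 1 else 0)" .
  qed
qed

locale gsetup =
  fixes n :: nat and N :: "nat \<Rightarrow> nat" and S :: "nat \<Rightarrow> nat set"
  assumes S_sub: "\<And>i. i < n \<Longrightarrow> S i \<subseteq> {..<N i}" and S_fin: "\<And>i. finite (S i)"
begin

abbreviation "I \<equiv> var_idx n S"

lemma finI: "finite I"
proof -
  have "I \<subseteq> Sigma {..<n} S" unfolding var_idx_def by auto
  then show ?thesis by (rule finite_subset) (auto intro: S_fin)
qed

lemma PB_fin: "finite (PB n S i a)"
  unfolding PB_def by (rule finite_PiE) (auto intro: S_fin)

lemma PB_I: "b \<in> PB n S i a \<Longrightarrow> j \<in> {..<n} - {i} \<Longrightarrow> (j, b j) \<in> I"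
proof -
  assume b: "b \<in> PB n S i a" and j: "j \<in> {..<n} - {i}"
  have "b j \<in> (if j = i then {a} else S j)" using PiE_mem[OF b[unfolded PB_def]] j by blast
  then have "b j \<in> S j" using j by simp
  then show ?thesis using j unfolding var_idx_def by simp
qed

lemma PB_prof: "i < n \<Longrightarrow> a < N i \<Longrightarrow> PB n S i a \<subseteq> profiles n N"
  unfolding PB_def profiles_def
proof (rule PiE_mono)
  fix j assume "i < n" "a < N i" "j \<in> {..<n}"
  then show "(if j = i then {a} else S j) \<subseteq> {..<N j}" using S_sub[of j] by auto
qed

lemma lin_upart:
  "(\<Sum>v\<in>I. h v * dupart n S w i a q v) =
   (\<Sum>b\<in>PB n S i a. w i b * (\<Sum>j\<in>{..<n} - {i}. h (j, b j) * (\<Prod>k\<in>{..<n} - {i} - {j}. q (k, b k))))"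
  (is "_ = ?R")
proof -
  have "(\<Sum>v\<in>I. h v * dupart n S w i a q v) = (\<Sum>b\<in>PB n S i a. w i b * (\<Sum>v\<in>I. h v * dmono ({..<n} - {i}) b q v))"
  proof -
    have "(\<Sum>v\<in>I. h v * dupart n S w i a q v) = (\<Sum>v\<in>I. \<Sum>b\<in>PB n S i a. w i b * (h v * dmono ({..<n} - {i}) b q v))"
      unfolding dupart_def sum_distrib_left by (rule sum.cong[OF refl], rule sum.cong[OF refl]) (simp only: mult.left_commute)
    also have "\<dots> = (\<Sum>b\<in>PB n S i a. \<Sum>v\<in>I. w i b * (h v * dmono ({..<n} - {i}) b q v))"
      by (rule sum.swap)
    finally show ?thesis by (simp only: sum_distrib_left)
  qed
  also have "\<dots> = ?R"
    by (intro sum.cong refl arg_cong2[where f="(*)"] sum_dmono finI) (auto intro: PB_I)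
  finally show ?thesis by simp
qed

lemma card_J_le: "card ({..<n} - {i}) \<le> n"
proof -
  have "card ({..<n} - {i}) \<le> card {..<n}" by (rule card_mono) auto
  then show ?thesis by simp
qed

lemma const_mono: "0 \<le> r \<Longrightarrow> 0 \<le> d \<Longrightarrow> 2 * real (card ({..<n} - {i}))^2 * 2 ^ card ({..<n} - {i}) * r * d \<le> 2 * real n ^ 2 * 2 ^ n * r * d"
proof -
  assume r0: "0 \<le> r" and d0: "0 \<le> d"
  have c: "card ({..<n} - {i}) \<le> n" by (rule card_J_le)
  have "real (card ({..<n} - {i}))^2 \<le> real n ^ 2" using c by (intro power_mono) auto
  moreover have "(2::real) ^ card ({..<n} - {i}) \<le> 2 ^ n" using c by (intro power_increasing) auto
  ultimately have "real (card ({..<n} - {i}))^2 * 2 ^ card ({..<n} - {i}) \<le> real n ^ 2 * 2 ^ n"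
    by (intro mult_mono) auto
  then have "real (card ({..<n} - {i}))^2 * 2 ^ card ({..<n} - {i}) * (r * d) \<le> real n ^ 2 * 2 ^ n * (r * d)"
    by (rule mult_right_mono) (simp add: r0 d0)
  then show ?thesis by (simp add: mult.assoc)
qed

lemma sum_w_bound:
  assumes "\<And>b. b \<in> B \<Longrightarrow> \<bar>X b\<bar> \<le> C"
  shows "\<bar>\<Sum>b\<in>B. w b * X b\<bar> \<le> (\<Sum>b\<in>B. \<bar>w b\<bar>) * (C::real)"
proof -
  have "\<bar>\<Sum>b\<in>B. w b * X b\<bar> \<le> (\<Sum>b\<in>B. \<bar>w b * X b\<bar>)" by (rule sum_abs)
  also have "\<dots> \<le> (\<Sum>b\<in>B. \<bar>w b\<bar> * C)"
  proof (rule sum_mono)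
    fix b assume "b \<in> B"
    then have "\<bar>w b\<bar> * \<bar>X b\<bar> \<le> \<bar>w b\<bar> * C" by (intro mult_left_mono assms) simp_all
    then show "\<bar>w b * X b\<bar> \<le> \<bar>w b\<bar> * C" by (simp add: abs_mult)
  qed
  finally show ?thesis by (simp add: sum_distrib_right)
qed

lemma so_upart:
  assumes box: "\<forall>v\<in>I. \<bar>p v - p0 v\<bar> \<le> r \<and> \<bar>q v - p0 v\<bar> \<le> r \<and> \<bar>p0 v\<bar> \<le> 1 \<and> \<bar>p v - q v\<bar> \<le> d"
    and r1: "r \<le> 1" and r0: "0 \<le> r" and d0: "0 \<le> d"
  shows "\<bar>upart n S w i a p - upart n S w i a q - (\<Sum>v\<in>I. (p v - q v) * dupart n S w i a p0 v)\<bar>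
     \<le> (\<Sum>b\<in>PB n S i a. \<bar>w i b\<bar>) * (2 * real n ^ 2 * 2 ^ n * r * d)"
proof -
  let ?J = "{..<n} - {i}"
  let ?C = "2 * real n ^ 2 * 2 ^ n * r * d"
  have eq: "upart n S w i a p - upart n S w i a q - (\<Sum>v\<in>I. (p v - q v) * dupart n S w i a p0 v)
     = (\<Sum>b\<in>PB n S i a. w i b * (mnm ?J b p - mnm ?J b q -
          (\<Sum>j\<in>?J. (p (j, b j) - q (j, b j)) * (\<Prod>k\<in>?J - {j}. p0 (k, b k)))))"
    unfolding upart_alt lin_upart sum_subtractf[symmetric] by (rule sum.cong) (simp_all add: right_diff_distrib)
  have per: "\<bar>mnm ?J b p - mnm ?J b q - (\<Sum>j\<in>?J. (p (j, b j) - q (j, b j)) * (\<Prod>k\<in>?J - {j}. p0 (k, b k)))\<bar> \<le> ?C"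
    if b: "b \<in> PB n S i a" for b
  proof -
    have inI: "\<forall>j\<in>?J. (j, b j) \<in> I" using PB_I[OF b] by blast
    have "\<bar>mnm ?J b p - mnm ?J b q - (\<Sum>j\<in>?J. (p (j, b j) - q (j, b j)) * (\<Prod>k\<in>?J - {j}. p0 (k, b k)))\<bar>
       \<le> 2 * real (card ?J)^2 * 2 ^ card ?J * r * d"
      unfolding mnm_def
    proof (rule prod_second_order[where a="\<lambda>j. p (j, b j)" and b="\<lambda>j. q (j, b j)" and c="\<lambda>j. p0 (j, b j)", simplified])
      show "\<forall>j\<in>?J. \<bar>p (j, b j)\<bar> \<le> 2"
      proof
        fix j assume "j \<in> ?J"
        then have "\<bar>p (j, b j) - p0 (j, b j)\<bar> \<le> r" "\<bar>p0 (j, b j)\<bar> \<le> 1" using box inI by blast+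
        then show "\<bar>p (j, b j)\<bar> \<le> 2" using r1 by linarith
      qed
      show "\<forall>j\<in>?J. \<bar>q (j, b j)\<bar> \<le> 2"
      proof
        fix j assume "j \<in> ?J"
        then have "\<bar>q (j, b j) - p0 (j, b j)\<bar> \<le> r" "\<bar>p0 (j, b j)\<bar> \<le> 1" using box inI by blast+
        then show "\<bar>q (j, b j)\<bar> \<le> 2" using r1 by linarith
      qed
      show "\<forall>j\<in>?J. \<bar>p0 (j, b j)\<bar> \<le> 2"
      proof
        fix j assume "j \<in> ?J"
        then have "\<bar>p0 (j, b j)\<bar> \<le> 1" using box inI by blast
        then show "\<bar>p0 (j, b j)\<bar> \<le> 2" by linarith
      qed
      show "\<forall>j\<in>?J. \<bar>p (j, b j) - p0 (j, b j)\<bar> \<le> r" using box inI by blast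
      show "\<forall>j\<in>?J. \<bar>q (j, b j) - p0 (j, b j)\<bar> \<le> r" using box inI by blast
      show "\<forall>j\<in>?J. \<bar>p (j, b j) - q (j, b j)\<bar> \<le> d" using box inI by blast
    qed auto
    also have "\<dots> \<le> ?C" by (rule const_mono[OF r0 d0])
    finally show ?thesis .
  qed
  show ?thesis unfolding eq by (rule sum_w_bound) (rule per)
qed

lemma lip_upart:
  assumes box: "\<forall>v\<in>I. \<bar>p v\<bar> \<le> 2 \<and> \<bar>q v\<bar> \<le> 2 \<and> \<bar>p v - q v\<bar> \<le> d" and d0: "0 \<le> d"
  shows "\<bar>upart n S w i a p - upart n S w i a q\<bar> \<le> (\<Sum>b\<in>PB n S i a. \<bar>w i b\<bar>) * (real n * 2 ^ n * d)"
proof -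
  let ?J = "{..<n} - {i}"
  have eq: "upart n S w i a p - upart n S w i a q = (\<Sum>b\<in>PB n S i a. w i b * (mnm ?J b p - mnm ?J b q))"
    unfolding upart_alt by (simp add: sum_subtractf algebra_simps)
  have per: "\<bar>mnm ?J b p - mnm ?J b q\<bar> \<le> real n * 2 ^ n * d" if b: "b \<in> PB n S i a" for b
  proof -
    have inI: "\<forall>j\<in>?J. (j, b j) \<in> I" using PB_I[OF b] by blast
    have "\<bar>mnm ?J b p - mnm ?J b q\<bar> \<le> real (card ?J) * 2 ^ card ?J * d"
      unfolding mnm_def
      by (rule prod_diff_bound[where a="\<lambda>j. p (j, b j)" and b="\<lambda>j. q (j, b j)", simplified])
         (use box inI in auto)
    also have "\<dots> \<le> real n * 2 ^ n * d"
    proof -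
      have c: "card ?J \<le> n" by (rule card_J_le)
      have "real (card ?J) * 2 ^ card ?J \<le> real n * 2 ^ n"
        using c by (intro mult_mono power_increasing) auto
      then show ?thesis using d0 by (intro mult_right_mono) auto
    qed
    finally show ?thesis .
  qed
  show ?thesis unfolding eq by (rule sum_w_bound) (rule per)
qed

lemma bnd_upart:
  assumes box: "\<forall>v\<in>I. \<bar>p v\<bar> \<le> 2"
  shows "\<bar>upart n S w i a p\<bar> \<le> (\<Sum>b\<in>PB n S i a. \<bar>w i b\<bar>) * 2 ^ n"
proof -
  let ?J = "{..<n} - {i}"
  have per: "\<bar>mnm ?J b p\<bar> \<le> 2 ^ n" if b: "b \<in> PB n S i a" for b
  proof -
    have inI: "\<forall>j\<in>?J. (j, b j) \<in> I" using PB_I[OF b] by blast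
    have "\<bar>mnm ?J b p\<bar> \<le> 2 ^ card ?J" unfolding mnm_def by (rule prod_abs_le) (use box inI in auto)
    also have "\<dots> \<le> 2 ^ n" using card_J_le by (intro power_increasing) auto
    finally show ?thesis .
  qed
  show ?thesis unfolding upart_alt by (rule sum_w_bound) (rule per)
qed

lemma upart_diff: "upart n S (\<lambda>i b. w1 i b - w2 i b) i a p = upart n S w1 i a p - upart n S w2 i a p"
  unfolding upart_alt by (simp add: sum_subtractf algebra_simps)

lemma Wsum_prof:
  assumes "i < n" "a < N i"
  shows "(\<Sum>b\<in>PB n S i a. \<bar>w i b\<bar>) \<le> (\<Sum>b\<in>profiles n N. \<bar>(w i b::real)\<bar>)"
proof -
  have f: "finite (profiles n N)" unfolding profiles_def by (rule finite_PiE) auto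
  show ?thesis using sum_mono2[OF f PB_prof[OF assms], of "\<lambda>b. \<bar>w i b\<bar>"] by simp
qed

end

context gsetup begin

lemma fin_prof: "finite (profiles n N)" unfolding profiles_def by (rule finite_PiE) auto

lemma eu_dev:
  assumes i: "i < n" and zero: "\<forall>j<n. j \<noteq> i \<longrightarrow> (\<forall>l<N j. l \<notin> S j \<longrightarrow> \<rho> j l = 0)"
  shows "eu n N w i (\<rho>(i := \<tau>)) = (\<Sum>k<N i. \<tau> k * upart n S w i k (\<lambda>(j, l). \<rho> j l))"
proof -
  let ?J = "{..<n} - {i}"
  define Q where "Q = PiE {..<n} (\<lambda>j. if j = i then {..<N i} else S j)"
  have Qsub: "Q \<subseteq> profiles n N" unfolding Q_def profiles_def
  proof (rule PiE_mono)
    fix j assume "j \<in> {..<n}" then show "(if j = i then {..<N i} else S j) \<subseteq> {..<N j}" using S_sub[of j] by auto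
  qed
  have finQ: "finite Q" unfolding Q_def by (rule finite_PiE) (auto intro: S_fin)
  have prodsplit: "(\<Prod>j<n. (\<rho>(i := \<tau>)) j (a j)) = \<tau> (a i) * (\<Prod>j\<in>?J. \<rho> j (a j))" for a
  proof -
    have "(\<Prod>j<n. (\<rho>(i := \<tau>)) j (a j)) = (\<rho>(i := \<tau>)) i (a i) * (\<Prod>j\<in>?J. (\<rho>(i := \<tau>)) j (a j))"
      by (rule prod.remove) (use i in auto)
    also have "(\<Prod>j\<in>?J. (\<rho>(i := \<tau>)) j (a j)) = (\<Prod>j\<in>?J. \<rho> j (a j))"
      by (rule prod.cong) auto
    finally show ?thesis by simp
  qed
  have "eu n N w i (\<rho>(i := \<tau>)) = (\<Sum>a\<in>profiles n N. w i a * (\<tau> (a i) * (\<Prod>j\<in>?J. \<rho> j (a j))))"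
    unfolding eu_def prodsplit ..
  also have "\<dots> = (\<Sum>a\<in>Q. w i a * (\<tau> (a i) * (\<Prod>j\<in>?J. \<rho> j (a j))))"
  proof (rule sum.mono_neutral_right[OF fin_prof Qsub])
    show "\<forall>a\<in>profiles n N - Q. w i a * (\<tau> (a i) * (\<Prod>j\<in>?J. \<rho> j (a j))) = 0"
    proof
      fix a assume a: "a \<in> profiles n N - Q"
      then have ap: "\<forall>j<n. a j < N j" unfolding profiles_def by (auto simp: PiE_iff)
      have ae: "a \<in> extensional {..<n}" using a unfolding profiles_def by (auto simp: PiE_iff)
      obtain j where j: "j < n" "a j \<notin> (if j = i then {..<N i} else S j)"
        using a ae unfolding Q_def by (auto simp: PiE_iff)
      then have ji: "j \<noteq> i" using ap by auto
      then have "\<rho> j (a j) = 0" using zero j ap by auto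
      then have "(\<Prod>j\<in>?J. \<rho> j (a j)) = 0" using j ji by (intro prod_zero) auto
      then show "w i a * (\<tau> (a i) * (\<Prod>j\<in>?J. \<rho> j (a j))) = 0" by simp
    qed
  qed
  also have "\<dots> = (\<Sum>k<N i. \<Sum>a\<in>{x. x \<in> Q \<and> x i = k}. w i a * (\<tau> (a i) * (\<Prod>j\<in>?J. \<rho> j (a j))))"
  proof (rule sum.group[symmetric, OF finQ])
    show "(\<lambda>x. x i) ` Q \<subseteq> {..<N i}"
    proof
      fix y assume "y \<in> (\<lambda>x. x i) ` Q"
      then obtain x where x: "x \<in> Q" "y = x i" by blast
      have "x i \<in> (if i = i then {..<N i} else S i)" using PiE_mem[OF x(1)[unfolded Q_def]] i by blast
      then show "y \<in> {..<N i}" using x by simp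
    qed
  qed simp
  also have "\<dots> = (\<Sum>k<N i. \<tau> k * upart n S w i k (\<lambda>(j, l). \<rho> j l))"
  proof (rule sum.cong[OF refl])
    fix k assume k: "k \<in> {..<N i}"
    have PBi: "x i = k" if "x \<in> PB n S i k" for x
      using PiE_mem[OF that[unfolded PB_def], of i] i by simp
    have set: "{x. x \<in> Q \<and> x i = k} = PB n S i k"
    proof (rule equalityI; rule subsetI)
      fix x assume "x \<in> {x. x \<in> Q \<and> x i = k}"
      then have x: "x \<in> Q" "x i = k" by auto
      show "x \<in> PB n S i k" unfolding PB_def PiE_iff
      proof (intro conjI ballI)
        fix j assume j: "j \<in> {..<n}"
        show "x j \<in> (if j = i then {k} else S j)"
          using PiE_mem[OF x(1)[unfolded Q_def] j] x(2) by (cases "j = i") auto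
      next
        show "x \<in> extensional {..<n}" using x(1) unfolding Q_def by (simp add: PiE_iff)
      qed
    next
      fix x assume x: "x \<in> PB n S i k"
      have "x \<in> Q" unfolding Q_def
      proof (rule subsetD[OF PiE_mono x[unfolded PB_def]])
        fix j assume "j \<in> {..<n}"
        show "(if j = i then {k} else S j) \<subseteq> (if j = i then {..<N i} else S j)" using k by auto
      qed
      then show "x \<in> {x. x \<in> Q \<and> x i = k}" using PBi[OF x] by simp
    qed
    show "(\<Sum>a\<in>{x. x \<in> Q \<and> x i = k}. w i a * (\<tau> (a i) * (\<Prod>j\<in>?J. \<rho> j (a j)))) = \<tau> k * upart n S w i k (\<lambda>(j, l). \<rho> j l)"
      unfolding set upart_alt mnm_def sum_distrib_left
      by (rule sum.cong[OF refl]) (simp add: PBi)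
  qed
  finally show ?thesis .
qed

end

lemma supp_sub: "support N \<sigma> i \<subseteq> {..<N i}" unfolding support_def by auto

lemma supp_gsetup: "gsetup n N (support N \<sigma>)"
  by unfold_locales (auto simp: support_def intro: finite_subset[OF supp_sub])

lemma pure_mixed: "k < N i \<Longrightarrow> mixed N i (\<lambda>l. if l = k then 1 else 0)"
  unfolding mixed_def by simp

lemma mixed_supp:
  assumes "mixed N i \<tau>"
  shows "\<forall>l\<in>support N (\<lambda>_. \<tau>) i. 0 < \<tau> l" "\<forall>l<N i. l \<notin> support N (\<lambda>_. \<tau>) i \<longrightarrow> \<tau> l = 0"
    "(\<Sum>l\<in>support N (\<lambda>_. \<tau>) i. \<tau> l) = 1" "\<forall>l\<in>support N (\<lambda>_. \<tau>) i. \<tau> l \<le> 1"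
    "support N (\<lambda>_. \<tau>) i \<noteq> {}"
proof -
  have nn: "\<forall>l<N i. 0 \<le> \<tau> l" and s1: "(\<Sum>l<N i. \<tau> l) = 1" using assms unfolding mixed_def by auto
  show "\<forall>l\<in>support N (\<lambda>_. \<tau>) i. 0 < \<tau> l" using nn unfolding support_def by force
  show z: "\<forall>l<N i. l \<notin> support N (\<lambda>_. \<tau>) i \<longrightarrow> \<tau> l = 0" unfolding support_def by auto
  have eq: "(\<Sum>l\<in>support N (\<lambda>_. \<tau>) i. \<tau> l) = (\<Sum>l<N i. \<tau> l)"
    by (rule sum.mono_neutral_left) (use z supp_sub in auto)
  then show s: "(\<Sum>l\<in>support N (\<lambda>_. \<tau>) i. \<tau> l) = 1" using s1 by simp
  show "\<forall>l\<in>support N (\<lambda>_. \<tau>) i. \<tau> l \<le> 1"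
  proof
    fix l assume l: "l \<in> support N (\<lambda>_. \<tau>) i"
    have "\<tau> l \<le> (\<Sum>l<N i. \<tau> l)"
      by (rule member_le_sum) (use l nn in \<open>auto simp: support_def\<close>)
    then show "\<tau> l \<le> 1" using s1 by simp
  qed
  show "support N (\<lambda>_. \<tau>) i \<noteq> {}" using s by auto
qed

lemma supp_const: "support N (\<lambda>_. \<sigma> i) i = support N \<sigma> i"
  unfolding support_def by simp

lemma nash_facts:
  assumes nash: "nash n N u \<sigma>" and i: "i < n"
  defines "S \<equiv> support N \<sigma>"
  shows "\<forall>l\<in>S i. 0 < \<sigma> i l" "\<forall>l<N i. l \<notin> S i \<longrightarrow> \<sigma> i l = 0"
    "(\<Sum>l\<in>S i. \<sigma> i l) = 1" "\<forall>l\<in>S i. \<sigma> i l \<le> 1" "S i \<noteq> {}"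
  using mixed_supp[of N i "\<sigma> i"] nash i unfolding nash_def S_def supp_const by auto

lemma nash_eq:
  assumes nash: "nash n N u \<sigma>" and i: "i < n"
  defines "S \<equiv> support N \<sigma>"
  defines "p0 \<equiv> (\<lambda>(j, l). \<sigma> j l)"
  shows "\<forall>k\<in>S i. upart n S u i k p0 = eu n N u i \<sigma>"
    "\<forall>k<N i. upart n S u i k p0 \<le> eu n N u i \<sigma>"
proof -
  interpret gsetup n N S unfolding S_def by (rule supp_gsetup)
  have zero: "\<forall>j<n. j \<noteq> i \<longrightarrow> (\<forall>l<N j. l \<notin> S j \<longrightarrow> \<sigma> j l = 0)"
    using nash_facts(2)[OF nash] unfolding S_def by blast
  let ?U = "\<lambda>k. upart n S u i k p0"
  have dev: "eu n N u i (\<sigma>(i := \<tau>)) = (\<Sum>k<N i. \<tau> k * ?U k)" for \<tau>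
    unfolding p0_def by (rule eu_dev[OF i zero])
  have le: "?U k \<le> eu n N u i \<sigma>" if k: "k < N i" for k
  proof -
    have "eu n N u i (\<sigma>(i := (\<lambda>l. if l = k then 1 else 0))) \<le> eu n N u i \<sigma>"
      using nash pure_mixed[of k N i, OF k] i unfolding nash_def by blast
    moreover have "eu n N u i (\<sigma>(i := (\<lambda>l. if l = k then 1 else 0))) = ?U k"
    proof -
      have "(\<Sum>k'<N i. (if k' = k then 1 else 0) * ?U k') = (\<Sum>k'<N i. if k' = k then ?U k' else 0)"
        by (rule sum.cong) auto
      also have "\<dots> = ?U k" using k by (simp add: sum.delta)
      finally show ?thesis unfolding dev .
    qed
    ultimately show ?thesis by simp
  qed
  then show "\<forall>k<N i. ?U k \<le> eu n N u i \<sigma>" by blast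
  have eus: "eu n N u i \<sigma> = (\<Sum>k<N i. \<sigma> i k * ?U k)"
    using dev[of "\<sigma> i"] by simp
  have s1: "(\<Sum>k<N i. \<sigma> i k) = 1" using nash i unfolding nash_def mixed_def by auto
  have nn: "\<forall>k<N i. 0 \<le> \<sigma> i k" using nash i unfolding nash_def mixed_def by auto
  have "(\<Sum>k<N i. \<sigma> i k * (eu n N u i \<sigma> - ?U k)) = eu n N u i \<sigma> * (\<Sum>k<N i. \<sigma> i k) - (\<Sum>k<N i. \<sigma> i k * ?U k)"
    by (simp add: algebra_simps sum_subtractf sum_distrib_left)
  also have "\<dots> = 0" using eus s1 by simp
  finally have "(\<Sum>k<N i. \<sigma> i k * (eu n N u i \<sigma> - ?U k)) = 0" .
  moreover have "\<forall>k\<in>{..<N i}. 0 \<le> \<sigma> i k * (eu n N u i \<sigma> - ?U k)"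
    using nn le by auto
  ultimately have all0: "\<forall>k\<in>{..<N i}. \<sigma> i k * (eu n N u i \<sigma> - ?U k) = 0"
    using sum_nonneg_eq_0_iff[of "{..<N i}" "\<lambda>k. \<sigma> i k * (eu n N u i \<sigma> - ?U k)"] by simp
  show "\<forall>k\<in>S i. ?U k = eu n N u i \<sigma>"
  proof
    fix k assume k: "k \<in> S i"
    have "k < N i" "\<sigma> i k \<noteq> 0" using k unfolding S_def support_def by auto
    then show "?U k = eu n N u i \<sigma>" using all0 by auto
  qed
qed

context gsetup begin

lemma upart_cong:
  assumes "\<forall>v\<in>I. p v = q v"
  shows "upart n S w i a p = upart n S w i a q"
  unfolding upart_alt mnm_def
  by (rule sum.cong[OF refl], rule arg_cong[where f="\<lambda>x. _ * x"], rule prod.cong[OF refl])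
     (use assms PB_I in blast)

lemma refcomp_sum:
  assumes i: "i < n"
  shows "(\<Sum>v\<in>I. (h v::real) * (if fst v = i \<and> snd v \<in> S i then 1 else 0)) = (\<Sum>l\<in>S i. h (i, l))"
proof -
  have "(\<Sum>v\<in>I. h v * (if fst v = i \<and> snd v \<in> S i then 1 else 0)) = (\<Sum>v\<in>I. if fst v = i \<and> snd v \<in> S i then h v else 0)"
    by (rule sum.cong) auto
  also have "\<dots> = (\<Sum>v\<in>{v\<in>I. fst v = i \<and> snd v \<in> S i}. h v)"
    by (rule sum.inter_filter[OF finI, symmetric])
  also have "{v\<in>I. fst v = i \<and> snd v \<in> S i} = (\<lambda>l. (i, l)) ` S i"
    using i unfolding var_idx_def by auto
  also have "(\<Sum>v\<in>(\<lambda>l. (i, l)) ` S i. h v) = (\<Sum>l\<in>S i. h (i, l))"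
    by (subst sum.reindex) (auto simp: inj_on_def)
  finally show ?thesis .
qed

lemma charf_cong:
  assumes c: "c \<in> I" and eq: "\<forall>v\<in>I. p v = q v"
  shows "charf n S w p c = charf n S w q c"
proof -
  obtain i k where ck: "c = (i, k)" "i < n" "k \<in> S i" using c unfolding var_idx_def by auto
  have "(\<Sum>l\<in>S i. p (i, l)) = (\<Sum>l\<in>S i. q (i, l))"
    by (rule sum.cong[OF refl]) (use eq ck in \<open>auto simp: var_idx_def\<close>)
  then show ?thesis unfolding charf_def ck using upart_cong[OF eq] by simp
qed

lemma Wsum_u:
  assumes "i < n" "a < N i"
  shows "(\<Sum>b\<in>PB n S i a. \<bar>w i b\<bar>) \<le> (\<Sum>i<n. \<Sum>b\<in>profiles n N. \<bar>(w i b::real)\<bar>)"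
proof -
  have "(\<Sum>b\<in>PB n S i a. \<bar>w i b\<bar>) \<le> (\<Sum>b\<in>profiles n N. \<bar>w i b\<bar>)" by (rule Wsum_prof[OF assms])
  also have "\<dots> \<le> (\<Sum>i<n. \<Sum>b\<in>profiles n N. \<bar>(w i b::real)\<bar>)"
    by (rule member_le_sum[where f="\<lambda>i. \<Sum>b\<in>profiles n N. \<bar>w i b\<bar>"]) (use assms in \<open>auto intro: sum_nonneg\<close>)
  finally show ?thesis .
qed

lemma Wsum_D:
  assumes "i < n" "a < N i" and close: "\<forall>i<n. \<forall>b\<in>profiles n N. \<bar>u' i b - u i b\<bar> \<le> \<delta>"
  shows "(\<Sum>b\<in>PB n S i a. \<bar>u' i b - u i b\<bar>) \<le> real (card (profiles n N)) * \<delta>"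
proof -
  have "(\<Sum>b\<in>PB n S i a. \<bar>u' i b - u i b\<bar>) \<le> (\<Sum>b\<in>profiles n N. \<bar>u' i b - u i b\<bar>)"
    by (rule Wsum_prof[OF assms(1,2)])
  also have "\<dots> \<le> (\<Sum>b\<in>profiles n N. \<delta>)" by (rule sum_mono) (use close assms in auto)
  finally show ?thesis by simp
qed

lemma S_lt: "i < n \<Longrightarrow> k \<in> S i \<Longrightarrow> k < N i" using S_sub by auto

lemma ref_in: "S i \<noteq> {} \<Longrightarrow> ref_act S i \<in> S i"
  unfolding ref_act_def using S_fin by (rule Min_in) 

end

context gsetup begin

lemma abs4: "\<bar>x1::real\<bar> \<le> A \<Longrightarrow> \<bar>x2\<bar> \<le> A \<Longrightarrow> \<bar>y1\<bar> \<le> B \<Longrightarrow> \<bar>y2\<bar> \<le> B \<Longrightarrow> \<bar>(x1 + y1) - (x2 + y2)\<bar> \<le> 2 * A + 2 * B"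
  by (simp add: abs_le_iff; linarith)

lemma R_est:
  assumes c: "c \<in> I"
    and box: "\<forall>v\<in>I. \<bar>p v - p0 v\<bar> \<le> r \<and> \<bar>q v - p0 v\<bar> \<le> r \<and> \<bar>p0 v\<bar> \<le> 1 \<and> \<bar>p v - q v\<bar> \<le> dd"
    and r0: "0 \<le> r" and r1: "r \<le> 1" and dd0: "0 \<le> dd" and \<delta>0: "0 \<le> \<delta>"
    and close: "\<forall>i<n. \<forall>b\<in>profiles n N. \<bar>u' i b - u i b\<bar> \<le> \<delta>"
  shows "\<bar>charf n S u' p c - charf n S u' q c - (\<Sum>v\<in>I. (p v - q v) * dcharf n S u p0 c v)\<bar>
    \<le> 2 * ((\<Sum>i<n. \<Sum>b\<in>profiles n N. \<bar>u i b\<bar>) * (2 * real n ^ 2 * 2 ^ n * r * dd))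
      + 2 * (real (card (profiles n N)) * \<delta> * (real n * 2 ^ n * dd))"
proof -
  let ?Wu = "(\<Sum>i<n. \<Sum>b\<in>profiles n N. \<bar>u i b\<bar>)"
  let ?P = "real (card (profiles n N))"
  have Wu0: "0 \<le> ?Wu" by (auto intro: sum_nonneg)
  obtain i k where ck: "c = (i, k)" "i < n" "k \<in> S i" using c unfolding var_idx_def by auto
  have RHS0: "0 \<le> 2 * (?Wu * (2 * real n ^ 2 * 2 ^ n * r * dd)) + 2 * (?P * \<delta> * (real n * 2 ^ n * dd))"
    using Wu0 r0 dd0 \<delta>0 by (intro add_nonneg_nonneg mult_nonneg_nonneg) auto
  show ?thesis
  proof (cases "k = ref_act S i")
    case True
    have "charf n S u' p c - charf n S u' q c = (\<Sum>l\<in>S i. p (i, l) - q (i, l))"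
      unfolding charf_def ck using True by (simp add: sum_subtractf)
    moreover have "(\<Sum>v\<in>I. (p v - q v) * dcharf n S u p0 c v) = (\<Sum>l\<in>S i. p (i, l) - q (i, l))"
      unfolding dcharf_def ck using True refcomp_sum[OF ck(2), of "\<lambda>v. p v - q v"] by simp
    ultimately show ?thesis using RHS0 by simp
  next
    case False
    define a1 where "a1 = ref_act S i"
    have a1: "a1 < N i" using ref_in[of i] ck S_lt unfolding a1_def by auto
    have a2: "k < N i" using ck S_lt by auto
    define D where "D = (\<lambda>i b. u' i b - u i b)"
    have upD: "upart n S u' i a x = upart n S u i a x + upart n S D i a x" for a x
      unfolding D_def upart_diff by simp
    define SO where "SO a = upart n S u i a p - upart n S u i a q - (\<Sum>v\<in>I. (p v - q v) * dupart n S u i a p0 v)" for a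
    define LIP where "LIP a = upart n S D i a p - upart n S D i a q" for a
    have expr: "charf n S u' p c - charf n S u' q c - (\<Sum>v\<in>I. (p v - q v) * dcharf n S u p0 c v)
       = (SO a1 + LIP a1) - (SO k + LIP k)"
    proof -
      have "(\<Sum>v\<in>I. (p v - q v) * dcharf n S u p0 c v) = (\<Sum>v\<in>I. (p v - q v) * dupart n S u i a1 p0 v) - (\<Sum>v\<in>I. (p v - q v) * dupart n S u i k p0 v)"
        unfolding dcharf_def ck a1_def using False by (simp add: sum_subtractf right_diff_distrib)
      then show ?thesis unfolding charf_def ck SO_def LIP_def a1_def[symmetric] using False a1_def upD
        by (simp add: algebra_simps)
    qed
    have boxp: "\<forall>v\<in>I. \<bar>p v\<bar> \<le> 2 \<and> \<bar>q v\<bar> \<le> 2 \<and> \<bar>p v - q v\<bar> \<le> dd"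
    proof
      fix v assume v: "v \<in> I"
      then have "\<bar>p v - p0 v\<bar> \<le> r" "\<bar>q v - p0 v\<bar> \<le> r" "\<bar>p0 v\<bar> \<le> 1" "\<bar>p v - q v\<bar> \<le> dd" using box by auto
      then show "\<bar>p v\<bar> \<le> 2 \<and> \<bar>q v\<bar> \<le> 2 \<and> \<bar>p v - q v\<bar> \<le> dd" using r1 by (simp add: abs_le_iff; linarith)
    qed
    have soB: "\<bar>SO a\<bar> \<le> ?Wu * (2 * real n ^ 2 * 2 ^ n * r * dd)" if a: "a < N i" for a
    proof -
      have "\<bar>SO a\<bar> \<le> (\<Sum>b\<in>PB n S i a. \<bar>u i b\<bar>) * (2 * real n ^ 2 * 2 ^ n * r * dd)"
        unfolding SO_def by (rule so_upart[OF box r1 r0 dd0])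
      also have "\<dots> \<le> ?Wu * (2 * real n ^ 2 * 2 ^ n * r * dd)"
        by (rule mult_right_mono[OF Wsum_u[OF ck(2) a]]) (use r0 dd0 in auto)
      finally show ?thesis .
    qed
    have lipB: "\<bar>LIP a\<bar> \<le> ?P * \<delta> * (real n * 2 ^ n * dd)" if a: "a < N i" for a
    proof -
      have "\<bar>LIP a\<bar> \<le> (\<Sum>b\<in>PB n S i a. \<bar>D i b\<bar>) * (real n * 2 ^ n * dd)"
        unfolding LIP_def by (rule lip_upart[OF boxp dd0])
      also have "\<dots> \<le> ?P * \<delta> * (real n * 2 ^ n * dd)"
        by (rule mult_right_mono) (use Wsum_D[OF ck(2) a close] dd0 in \<open>auto simp: D_def\<close>)
      finally show ?thesis .
    qed
    show ?thesis unfolding expr by (rule abs4[OF soB[OF a1] soB[OF a2] lipB[OF a1] lipB[OF a2]])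
  qed
qed

lemma R0_est:
  assumes c: "c \<in> I" and box: "\<forall>v\<in>I. \<bar>p v\<bar> \<le> 2" and \<delta>0: "0 \<le> \<delta>"
    and close: "\<forall>i<n. \<forall>b\<in>profiles n N. \<bar>u' i b - u i b\<bar> \<le> \<delta>"
  shows "\<bar>charf n S u' p c - charf n S u p c\<bar> \<le> 2 * (real (card (profiles n N)) * \<delta> * 2 ^ n)"
proof -
  let ?P = "real (card (profiles n N))"
  obtain i k where ck: "c = (i, k)" "i < n" "k \<in> S i" using c unfolding var_idx_def by auto
  show ?thesis
  proof (cases "k = ref_act S i")
    case True
    then show ?thesis unfolding charf_def ck using \<delta>0 by simp
  next
    case False
    define a1 where "a1 = ref_act S i"
    have a1: "a1 < N i" using ref_in[of i] ck S_lt unfolding a1_def by auto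
    have a2: "k < N i" using ck S_lt by auto
    define D where "D = (\<lambda>i b. u' i b - u i b)"
    have upD: "upart n S u' i a x - upart n S u i a x = upart n S D i a x" for a x
      unfolding D_def upart_diff by simp
    have B: "\<bar>upart n S D i a p\<bar> \<le> ?P * \<delta> * 2 ^ n" if a: "a < N i" for a
    proof -
      have "\<bar>upart n S D i a p\<bar> \<le> (\<Sum>b\<in>PB n S i a. \<bar>D i b\<bar>) * 2 ^ n" by (rule bnd_upart[OF box])
      also have "\<dots> \<le> ?P * \<delta> * 2 ^ n"
        by (rule mult_right_mono) (use Wsum_D[OF ck(2) a close] in \<open>auto simp: D_def\<close>)
      finally show ?thesis .
    qed
    have "charf n S u' p c - charf n S u p c = upart n S D i a1 p - upart n S D i k p"
      unfolding charf_def ck using False upD[of a1 p] upD[of k p] unfolding a1_def by simp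
    then show ?thesis using B[OF a1] B[OF a2] by (simp add: abs_le_iff; linarith)
  qed
qed

lemma R1_est:
  assumes i: "i < n" and a: "a < N i" and box: "\<forall>v\<in>I. \<bar>p v - p0 v\<bar> \<le> r \<and> \<bar>p0 v\<bar> \<le> 1"
    and r0: "0 \<le> r" and r1: "r \<le> 1" and \<delta>0: "0 \<le> \<delta>"
    and close: "\<forall>i<n. \<forall>b\<in>profiles n N. \<bar>u' i b - u i b\<bar> \<le> \<delta>"
  shows "\<bar>upart n S u' i a p - upart n S u i a p0\<bar> \<le>
     real (card (profiles n N)) * \<delta> * 2 ^ n + (\<Sum>i<n. \<Sum>b\<in>profiles n N. \<bar>u i b\<bar>) * (real n * 2 ^ n * r)"
proof -
  let ?P = "real (card (profiles n N))"
  define D where "D = (\<lambda>i b. u' i b - u i b)"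
  have upD: "upart n S u' i a x = upart n S u i a x + upart n S D i a x" for x
    unfolding D_def upart_diff by simp
  have boxp: "\<forall>v\<in>I. \<bar>p v\<bar> \<le> 2" and boxp2: "\<forall>v\<in>I. \<bar>p v\<bar> \<le> 2 \<and> \<bar>p0 v\<bar> \<le> 2 \<and> \<bar>p v - p0 v\<bar> \<le> r"
    using box r1 by (auto simp: abs_le_iff)
  have B: "\<bar>upart n S D i a p\<bar> \<le> ?P * \<delta> * 2 ^ n"
  proof -
    have "\<bar>upart n S D i a p\<bar> \<le> (\<Sum>b\<in>PB n S i a. \<bar>D i b\<bar>) * 2 ^ n" by (rule bnd_upart[OF boxp])
    also have "\<dots> \<le> ?P * \<delta> * 2 ^ n"
      by (rule mult_right_mono) (use Wsum_D[OF i a close] in \<open>auto simp: D_def\<close>)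
    finally show ?thesis .
  qed
  have L: "\<bar>upart n S u i a p - upart n S u i a p0\<bar> \<le> (\<Sum>i<n. \<Sum>b\<in>profiles n N. \<bar>u i b\<bar>) * (real n * 2 ^ n * r)"
  proof -
    have "\<bar>upart n S u i a p - upart n S u i a p0\<bar> \<le> (\<Sum>b\<in>PB n S i a. \<bar>u i b\<bar>) * (real n * 2 ^ n * r)"
      by (rule lip_upart[OF boxp2 r0])
    also have "\<dots> \<le> (\<Sum>i<n. \<Sum>b\<in>profiles n N. \<bar>u i b\<bar>) * (real n * 2 ^ n * r)"
      by (rule mult_right_mono[OF Wsum_u[OF i a]]) (use r0 in auto)
    finally show ?thesis .
  qed
  show ?thesis using B L unfolding upD by (simp add: abs_le_iff; linarith)
qed

end

lemma arith1:
  fixes W P C1 C2 r \<delta> dd :: real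
  assumes "0 \<le> W" "0 \<le> P" "0 \<le> C1" "0 \<le> C2" "0 \<le> r" "0 \<le> \<delta>" "0 \<le> dd"
  shows "2 * (W * (C2 * r * dd)) + 2 * (P * \<delta> * (C1 * dd)) \<le> (2 * W * C2 + 2 * P * C1) * (r + \<delta>) * dd"
proof -
  have "(2 * W * C2 + 2 * P * C1) * (r + \<delta>) * dd = 2 * (W * (C2 * r * dd)) + 2 * (P * \<delta> * (C1 * dd)) + (2 * W * C2 * \<delta> * dd + 2 * P * C1 * r * dd)"
    by (simp add: algebra_simps)
  moreover have "0 \<le> 2 * W * C2 * \<delta> * dd + 2 * P * C1 * r * dd" using assms by simp
  ultimately show ?thesis by linarith
qed

lemma arith2:
  fixes W P C1 r \<delta> :: real
  assumes "0 \<le> W" "0 \<le> P" "0 \<le> C1" "0 \<le> r" "0 \<le> \<delta>" "0 \<le> E"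
  shows "P * \<delta> * E + W * (C1 * r) \<le> (P * E + W * C1) * (r + \<delta>)"
proof -
  have "(P * E + W * C1) * (r + \<delta>) = P * \<delta> * E + W * (C1 * r) + (P * E * r + W * C1 * \<delta>)"
    by (simp add: algebra_simps)
  moreover have "0 \<le> P * E * r + W * C1 * \<delta>" using assms by simp
  ultimately show ?thesis by linarith
qed

lemma inv_apply:
  fixes L M :: "'a \<Rightarrow> 'a \<Rightarrow> real"
  assumes fin: "finite I" and hMinvL: "\<forall>c\<in>I. \<forall>d\<in>I. (\<Sum>v\<in>I. M c v * L v d) = (if c = d then 1 else 0)" and c: "c \<in> I"
  shows "(\<Sum>d\<in>I. M c d * (\<Sum>v\<in>I. L d v * h v)) = h c"
proof -
  have "(\<Sum>d\<in>I. M c d * (\<Sum>v\<in>I. L d v * h v)) = (\<Sum>d\<in>I. \<Sum>v\<in>I. M c d * L d v * h v)"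
    by (simp add: sum_distrib_left mult.assoc)
  also have "\<dots> = (\<Sum>v\<in>I. \<Sum>d\<in>I. M c d * L d v * h v)" by (rule sum.swap)
  also have "\<dots> = (\<Sum>v\<in>I. (\<Sum>d\<in>I. M c d * L d v) * h v)" by (simp add: sum_distrib_right)
  also have "\<dots> = (\<Sum>v\<in>I. (if c = v then h v else 0))"
    by (rule sum.cong[OF refl]) (use hMinvL c in auto)
  also have "\<dots> = h c" using fin c by simp
  finally show ?thesis .
qed


lemma main_pos:
  fixes n :: nat and N :: "nat \<Rightarrow> nat"
    and u :: "nat \<Rightarrow> (nat \<Rightarrow> nat) \<Rightarrow> real" and \<sigma> :: "nat \<Rightarrow> nat \<Rightarrow> real"
  assumes nash: "nash n N u \<sigma>" and nd: "nondegenerate n N u \<sigma>" and n0: "0 < n" and \<epsilon>: "0 < \<epsilon>"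
  shows "\<exists>\<delta>>0. \<forall>u'. game_dist n N u u' < \<delta> \<longrightarrow>
           (\<exists>\<sigma>'. nash n N u' \<sigma>' \<and> (\<forall>i<n. support N \<sigma>' i = support N \<sigma> i) \<and>
                 (\<forall>i<n. eu n N u' i \<sigma>' - eu n N u i \<sigma> < \<epsilon>))"
proof -
  define S where "S = support N \<sigma>"
  define p0 where "p0 = (\<lambda>(j, l). \<sigma> j l)"
  interpret gsetup n N S unfolding S_def by (rule supp_gsetup)
  have Spos: "\<forall>l\<in>S i. 0 < \<sigma> i l" and Szero: "\<forall>l<N i. l \<notin> S i \<longrightarrow> \<sigma> i l = 0"
    and Ssum: "(\<Sum>l\<in>S i. \<sigma> i l) = 1" and Sle: "\<forall>l\<in>S i. \<sigma> i l \<le> 1" and Sne: "S i \<noteq> {}"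
    if "i < n" for i
    using nash_facts[OF nash that] unfolding S_def by auto
  have eqU: "\<forall>k\<in>S i. upart n S u i k p0 = eu n N u i \<sigma>" if "i < n" for i
    using nash_eq(1)[OF nash that] unfolding S_def p0_def by simp
  have p0I: "0 < p0 v \<and> p0 v \<le> 1" if "v \<in> I" for v
    using that Spos Sle unfolding var_idx_def p0_def by auto
  define L where "L = dcharf n S u p0"
  have detL: "det_on I L \<noteq> 0"
  proof -
    have "(\<lambda>c v. deriv (\<lambda>t. charf n S u (p0(v := t)) c) (p0 v)) = L"
      unfolding L_def by (intro ext deriv_charf S_fin)
    then show ?thesis using nd unfolding nondegenerate_def Let_def S_def[symmetric] p0_def[symmetric] by simp
  qed
  have resid: "\<forall>i<n. \<forall>k<N i. k \<notin> S i \<longrightarrow> upart n S u i (ref_act S i) p0 - upart n S u i k p0 > 0"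
    using nd unfolding nondegenerate_def Let_def S_def[symmetric] p0_def[symmetric] by simp
  obtain M where LM: "\<forall>c\<in>I. \<forall>d\<in>I. (\<Sum>v\<in>I. L c v * M v d) = (if c = d then 1 else 0)"
    and hMinvL: "\<forall>c\<in>I. \<forall>d\<in>I. (\<Sum>v\<in>I. M c v * L v d) = (if c = d then 1 else 0)"
    using det_on_inverse[OF finI detL] by blast
  define E where "E = charf n S u p0"
  have Eref: "E (i, ref_act S i) = 1" if "i < n" for i
    unfolding E_def charf_def p0_def using Ssum[OF that] by simp
  have Eoth: "E (i, k) = 0" if "i < n" "k \<in> S i" "k \<noteq> ref_act S i" for i k
    unfolding E_def charf_def using that eqU[OF that(1)] ref_in[OF Sne[OF that(1)]] by simp
  define Wu where "Wu = (\<Sum>i<n. \<Sum>b\<in>profiles n N. \<bar>u i b\<bar>)"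
  define P where "P = real (card (profiles n N))"
  define C1 where "C1 = real n * 2 ^ n"
  define C2 where "C2 = 2 * real n ^ 2 * 2 ^ n"
  define KB where "KB = (\<Sum>c\<in>I. \<Sum>d\<in>I. \<bar>M c d\<bar>)"
  define K1 where "K1 = 2 * Wu * C2 + 2 * P * C1"
  define K0 where "K0 = 2 * P * 2 ^ n"
  define K2 where "K2 = P * 2 ^ n + Wu * C1"
  define Q where "Q = KB * (K1 + K0) + 1"
  define Q2 where "Q2 = K2 + 1"
  have Wu0: "0 \<le> Wu" unfolding Wu_def by (auto intro: sum_nonneg)
  have P0: "0 \<le> P" unfolding P_def by simp
  have C10: "0 \<le> C1" unfolding C1_def by simp
  have C20: "0 \<le> C2" unfolding C2_def by simp
  have KB0: "0 \<le> KB" unfolding KB_def by (auto intro: sum_nonneg)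
  have K10: "0 \<le> K1" unfolding K1_def using Wu0 P0 C10 C20 by simp
  have K00: "0 \<le> K0" unfolding K0_def using P0 by simp
  have K20: "0 \<le> K2" unfolding K2_def using Wu0 P0 C10 by simp
  have Q1: "1 \<le> Q" unfolding Q_def using KB0 K10 K00 by simp
  have Q21: "1 \<le> Q2" unfolding Q2_def using K20 by simp
  have KBK1: "KB * K1 \<le> Q" and KBK0: "KB * K0 \<le> Q"
    unfolding Q_def using KB0 K10 K00 by (simp_all add: algebra_simps mult_nonneg_nonneg)
  have I_ne: "I \<noteq> {}"
  proof -
    have "(0, ref_act S 0) \<in> I" using ref_in[OF Sne[OF n0]] n0 unfolding var_idx_def by simp
    then show ?thesis by blast
  qed
  define \<mu> where "\<mu> = Min (p0 ` I)"
  have \<mu>0: "0 < \<mu>" unfolding \<mu>_def using finI I_ne p0I by (subst Min_gr_iff) auto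
  have \<mu>le: "\<mu> \<le> p0 v" if "v \<in> I" for v unfolding \<mu>_def using finI that by simp
  define G where "G = (\<lambda>(i, k). upart n S u i (ref_act S i) p0 - upart n S u i k p0) ` {(i, k). i < n \<and> k < N i \<and> k \<notin> S i}"
  have finG: "finite G"
  proof -
    have "{(i, k). i < n \<and> k < N i \<and> k \<notin> S i} \<subseteq> Sigma {..<n} (\<lambda>i. {..<N i})" by auto
    then have "finite {(i, k). i < n \<and> k < N i \<and> k \<notin> S i}" by (rule finite_subset) auto
    then show ?thesis unfolding G_def by simp
  qed
  define \<rho> where "\<rho> = Min (insert 1 G)"
  have \<rho>0: "0 < \<rho>" unfolding \<rho>_def using finG resid by (subst Min_gr_iff) (auto simp: G_def)
  have \<rho>le: "\<rho> \<le> upart n S u i (ref_act S i) p0 - upart n S u i k p0" if "i < n" "k < N i" "k \<notin> S i" for i k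
    unfolding \<rho>_def using finG that by (intro Min_le) (auto simp: G_def)
  define r where "r = min (min 1 (\<mu> / 2)) (min (1 / (4 * Q)) (min (\<rho> / (8 * Q2)) (\<epsilon> / (8 * Q2))))"
  define \<delta> where "\<delta> = r / (2 * Q)"
  have r0: "0 < r" unfolding r_def using \<mu>0 \<rho>0 \<epsilon> Q1 Q21 by simp
  have r1: "r \<le> 1" and r\<mu>: "r \<le> \<mu> / 2" and rQ: "r \<le> 1 / (4 * Q)" and r\<rho>: "r \<le> \<rho> / (8 * Q2)"
    and r\<epsilon>: "r \<le> \<epsilon> / (8 * Q2)" unfolding r_def by auto
  have \<delta>0: "0 < \<delta>" unfolding \<delta>_def using r0 Q1 by simp
  have \<delta>r: "\<delta> \<le> r" unfolding \<delta>_def using r0 Q1 by (simp add: field_simps)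
  have Q\<delta>: "Q * \<delta> = r / 2" unfolding \<delta>_def using Q1 by (simp add: field_simps)
  have A1: "KB * K1 * (r + \<delta>) \<le> 1 / 2"
  proof -
    have "KB * K1 * (r + \<delta>) \<le> Q * (2 * r)"
      by (rule mult_mono) (use KBK1 \<delta>r r0 \<delta>0 Q1 in auto)
    also have "\<dots> \<le> Q * (2 * (1 / (4 * Q)))" using rQ Q1 by (intro mult_left_mono) auto
    also have "\<dots> = 1 / 2" using Q1 by (simp add: field_simps)
    finally show ?thesis .
  qed
  have A0: "KB * K0 * \<delta> \<le> r / 2"
    using mult_right_mono[OF KBK0, of \<delta>] \<delta>0 Q\<delta> by simp
  have A2: "K2 * (r + \<delta>) \<le> \<rho> / 4" and A3: "K2 * (r + \<delta>) \<le> \<epsilon> / 4"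
  proof -
    have "K2 * (r + \<delta>) \<le> Q2 * (2 * r)"
      by (rule mult_mono) (use \<delta>r r0 \<delta>0 Q21 in \<open>auto simp: Q2_def\<close>)
    moreover have "Q2 * (2 * r) \<le> Q2 * (2 * (\<rho> / (8 * Q2)))" using r\<rho> Q21 by (intro mult_left_mono) auto
    moreover have "Q2 * (2 * r) \<le> Q2 * (2 * (\<epsilon> / (8 * Q2)))" using r\<epsilon> Q21 by (intro mult_left_mono) auto
    moreover have "Q2 * (2 * (\<rho> / (8 * Q2))) = \<rho> / 4" "Q2 * (2 * (\<epsilon> / (8 * Q2))) = \<epsilon> / 4"
      using Q21 by (simp_all add: field_simps)
    ultimately show "K2 * (r + \<delta>) \<le> \<rho> / 4" "K2 * (r + \<delta>) \<le> \<epsilon> / 4" by linarith+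
  qed
  show ?thesis
  proof (intro exI[of _ \<delta>] conjI allI impI)
    show "0 < \<delta>" by (rule \<delta>0)
    fix u' assume gd: "game_dist n N u u' < \<delta>"
    have close: "\<forall>i<n. \<forall>b\<in>profiles n N. \<bar>u' i b - u i b\<bar> \<le> \<delta>"
    proof (intro allI impI ballI)
      fix i b assume "i < n" "b \<in> profiles n N"
      then have "\<bar>u i b - u' i b\<bar> \<le> game_dist n N u u'"
        unfolding game_dist_def by (intro Max_ge) (auto intro: finite_SigmaI fin_prof)
      then show "\<bar>u' i b - u i b\<bar> \<le> \<delta>" using gd by (simp add: abs_minus_commute)
    qed
    define T where "T p = (\<lambda>c. if c \<in> I then p c - (\<Sum>d\<in>I. M c d * (charf n S u' p d - E d)) else p0 c)"
      for p :: "nat \<times> nat \<Rightarrow> real"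
    define X where "X = {p. (\<Sum>c\<in>I. \<bar>p c - p0 c\<bar>) \<le> r \<and> (\<forall>c. c \<notin> I \<longrightarrow> p c = p0 c)}"
    have coordX: "\<bar>p v - p0 v\<bar> \<le> r" if "p \<in> X" "v \<in> I" for p v
    proof -
      have "\<bar>p v - p0 v\<bar> \<le> (\<Sum>c\<in>I. \<bar>p c - p0 c\<bar>)" by (rule member_le_sum) (use that finI in auto)
      then show ?thesis using that unfolding X_def by simp
    qed
    have p0X: "p0 \<in> X" unfolding X_def using r0 by simp
    have p0b: "\<bar>p0 v\<bar> \<le> 1" if "v \<in> I" for v using p0I[OF that] by simp
    have contr: "\<forall>p\<in>X. \<forall>q\<in>X. (\<Sum>c\<in>I. \<bar>T p c - T q c\<bar>) \<le> 1/2 * (\<Sum>c\<in>I. \<bar>p c - q c\<bar>)"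
    proof (intro ballI)
      fix p q assume p: "p \<in> X" and q: "q \<in> X"
      define dd where "dd = (\<Sum>c\<in>I. \<bar>p c - q c\<bar>)"
      have dd0: "0 \<le> dd" unfolding dd_def by (auto intro: sum_nonneg)
      have cdd: "\<bar>p v - q v\<bar> \<le> dd" if "v \<in> I" for v
        unfolding dd_def by (rule member_le_sum) (use that finI in auto)
      define R where "R d = charf n S u' p d - charf n S u' q d - (\<Sum>v\<in>I. (p v - q v) * L d v)" for d
      have Rb: "\<bar>R d\<bar> \<le> K1 * (r + \<delta>) * dd" if d: "d \<in> I" for d
      proof -
        have "\<bar>R d\<bar> \<le> 2 * (Wu * (C2 * r * dd)) + 2 * (P * \<delta> * (C1 * dd))"
          unfolding R_def L_def Wu_def P_def C1_def C2_def
          by (rule R_est[OF d]) (use coordX p q p0b cdd r0 r1 dd0 \<delta>0 close in auto)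
        also have "\<dots> \<le> K1 * (r + \<delta>) * dd" unfolding K1_def
          by (rule arith1) (use Wu0 P0 C10 C20 r0 \<delta>0 dd0 in auto)
        finally show ?thesis .
      qed
      have diff: "T p c - T q c = - (\<Sum>d\<in>I. M c d * R d)" if c: "c \<in> I" for c
      proof -
        have "p c - q c = (\<Sum>d\<in>I. M c d * (\<Sum>v\<in>I. L d v * (p v - q v)))"
          by (rule inv_apply[OF finI hMinvL c, symmetric])
        moreover have "T p c - T q c = (p c - q c) - (\<Sum>d\<in>I. M c d * (charf n S u' p d - charf n S u' q d))"
        proof -
          have "(\<Sum>d\<in>I. M c d * (charf n S u' p d - E d)) - (\<Sum>d\<in>I. M c d * (charf n S u' q d - E d))
              = (\<Sum>d\<in>I. M c d * (charf n S u' p d - E d) - M c d * (charf n S u' q d - E d))"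
            by (rule sum_subtractf[symmetric])
          also have "\<dots> = (\<Sum>d\<in>I. M c d * (charf n S u' p d - charf n S u' q d))"
            by (rule sum.cong) (simp_all add: algebra_simps)
          finally show ?thesis unfolding T_def using c by simp
        qed
        moreover have "(\<Sum>d\<in>I. M c d * (\<Sum>v\<in>I. L d v * (p v - q v))) - (\<Sum>d\<in>I. M c d * (charf n S u' p d - charf n S u' q d))
            = - (\<Sum>d\<in>I. M c d * R d)"
        proof -
          have "(\<Sum>d\<in>I. M c d * (\<Sum>v\<in>I. L d v * (p v - q v))) - (\<Sum>d\<in>I. M c d * (charf n S u' p d - charf n S u' q d))
              = (\<Sum>d\<in>I. M c d * (\<Sum>v\<in>I. L d v * (p v - q v)) - M c d * (charf n S u' p d - charf n S u' q d))"
            by (rule sum_subtractf[symmetric])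
          also have "\<dots> = (\<Sum>d\<in>I. - (M c d * R d))"
          proof (rule sum.cong[OF refl])
            fix d
            have "(\<Sum>v\<in>I. L d v * (p v - q v)) = (\<Sum>v\<in>I. (p v - q v) * L d v)" by (simp add: mult.commute)
            then show "M c d * (\<Sum>v\<in>I. L d v * (p v - q v)) - M c d * (charf n S u' p d - charf n S u' q d) = - (M c d * R d)"
              unfolding R_def by (simp add: algebra_simps)
          qed
          also have "\<dots> = - (\<Sum>d\<in>I. M c d * R d)" by (rule sum_negf)
          finally show ?thesis .
        qed
        ultimately show ?thesis by linarith
      qed
      have "(\<Sum>c\<in>I. \<bar>T p c - T q c\<bar>) \<le> (\<Sum>c\<in>I. \<Sum>d\<in>I. \<bar>M c d\<bar> * (K1 * (r + \<delta>) * dd))"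
      proof (rule sum_mono)
        fix c assume c: "c \<in> I"
        have "\<bar>T p c - T q c\<bar> = \<bar>\<Sum>d\<in>I. M c d * R d\<bar>" using diff[OF c] by simp
        also have "\<dots> \<le> (\<Sum>d\<in>I. \<bar>M c d * R d\<bar>)" by (rule sum_abs)
        also have "\<dots> \<le> (\<Sum>d\<in>I. \<bar>M c d\<bar> * (K1 * (r + \<delta>) * dd))"
          by (rule sum_mono) (auto simp: abs_mult intro: mult_left_mono Rb)
        finally show "\<bar>T p c - T q c\<bar> \<le> (\<Sum>d\<in>I. \<bar>M c d\<bar> * (K1 * (r + \<delta>) * dd))" .
      qed
      also have "\<dots> = KB * K1 * (r + \<delta>) * dd" unfolding KB_def by (simp add: sum_distrib_right mult.assoc)
      also have "\<dots> \<le> 1/2 * dd" using mult_right_mono[OF A1 dd0] by simp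
      finally show "(\<Sum>c\<in>I. \<bar>T p c - T q c\<bar>) \<le> 1/2 * (\<Sum>c\<in>I. \<bar>p c - q c\<bar>)" unfolding dd_def .
    qed
    have maps: "\<forall>p\<in>X. T p \<in> X"
    proof
      fix p assume p: "p \<in> X"
      have T0: "\<bar>T p0 c - p0 c\<bar> \<le> (\<Sum>d\<in>I. \<bar>M c d\<bar> * (K0 * \<delta>))" if c: "c \<in> I" for c
      proof -
        have "\<bar>T p0 c - p0 c\<bar> = \<bar>\<Sum>d\<in>I. M c d * (charf n S u' p0 d - E d)\<bar>" unfolding T_def using c by simp
        also have "\<dots> \<le> (\<Sum>d\<in>I. \<bar>M c d * (charf n S u' p0 d - E d)\<bar>)" by (rule sum_abs)
        also have "\<dots> \<le> (\<Sum>d\<in>I. \<bar>M c d\<bar> * (K0 * \<delta>))"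
        proof (rule sum_mono)
          fix d assume d: "d \<in> I"
          have "\<bar>charf n S u' p0 d - E d\<bar> \<le> 2 * (P * \<delta> * 2 ^ n)"
          proof -
            have "\<forall>v\<in>I. \<bar>p0 v\<bar> \<le> 2" using p0b by fastforce
            then show ?thesis unfolding E_def P_def by (rule R0_est[OF d]) (use \<delta>0 close in auto)
          qed
          then have "\<bar>charf n S u' p0 d - E d\<bar> \<le> K0 * \<delta>" unfolding K0_def by (simp add: algebra_simps)
          then show "\<bar>M c d * (charf n S u' p0 d - E d)\<bar> \<le> \<bar>M c d\<bar> * (K0 * \<delta>)"
            by (simp add: abs_mult mult_left_mono)
        qed
        finally show ?thesis .
      qed
      have "(\<Sum>c\<in>I. \<bar>T p c - p0 c\<bar>) \<le> (\<Sum>c\<in>I. \<bar>T p c - T p0 c\<bar> + \<bar>T p0 c - p0 c\<bar>)"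
        by (rule sum_mono) linarith
      also have "\<dots> = (\<Sum>c\<in>I. \<bar>T p c - T p0 c\<bar>) + (\<Sum>c\<in>I. \<bar>T p0 c - p0 c\<bar>)" by (rule sum.distrib)
      also have "\<dots> \<le> 1/2 * (\<Sum>c\<in>I. \<bar>p c - p0 c\<bar>) + (\<Sum>c\<in>I. \<Sum>d\<in>I. \<bar>M c d\<bar> * (K0 * \<delta>))"
        by (intro add_mono sum_mono T0) (use contr p p0X in auto)
      also have "\<dots> \<le> 1/2 * r + KB * K0 * \<delta>"
      proof -
        have a: "(\<Sum>c\<in>I. \<bar>p c - p0 c\<bar>) \<le> r" using p unfolding X_def by simp
        have b: "(\<Sum>c\<in>I. \<Sum>d\<in>I. \<bar>M c d\<bar> * (K0 * \<delta>)) = KB * K0 * \<delta>"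
          unfolding KB_def by (simp add: sum_distrib_right mult.assoc)
        show ?thesis using a b by linarith
      qed
      also have "\<dots> \<le> r" using A0 by simp
      finally show "T p \<in> X" unfolding X_def T_def by simp
    qed
    obtain ps where psX: "ps \<in> X" and hfix: "T ps = ps"
      using contraction_fix[OF finI _ X_def maps contr] r0 by auto
    have Fps: "charf n S u' ps d = E d" if d: "d \<in> I" for d
    proof -
      define Y where "Y d = charf n S u' ps d - E d" for d
      have Y0: "(\<Sum>d\<in>I. M c d * Y d) = 0" if c: "c \<in> I" for c
      proof -
        have "T ps c = ps c" using hfix by simp
        then show ?thesis unfolding T_def Y_def using c by simp
      qed
      have "Y d = (\<Sum>c\<in>I. L d c * (\<Sum>d'\<in>I. M c d' * Y d'))"
        by (rule inv_apply[OF finI LM d, symmetric])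
      also have "\<dots> = 0" using Y0 by simp
      finally show ?thesis unfolding Y_def by simp
    qed
    have psr: "\<bar>ps v - p0 v\<bar> \<le> r" if "v \<in> I" for v using coordX[OF psX that] .
    show "\<exists>\<sigma>'. nash n N u' \<sigma>' \<and> (\<forall>i<n. support N \<sigma>' i = support N \<sigma> i) \<and>
                 (\<forall>i<n. eu n N u' i \<sigma>' - eu n N u i \<sigma> < \<epsilon>)"
    proof -
      define \<sigma>' where "\<sigma>' j l = (if l \<in> S j then ps (j, l) else 0)" for j l
      define p' where "p' = (\<lambda>(j, l). \<sigma>' j l)"
      have p'eq: "\<forall>v\<in>I. p' v = ps v" unfolding p'_def \<sigma>'_def var_idx_def by auto
      have pspos: "0 < ps (i, l)" if "i < n" "l \<in> S i" for i l
      proof -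
        have v: "(i, l) \<in> I" using that unfolding var_idx_def by simp
        have "\<mu> \<le> p0 (i, l)" by (rule \<mu>le[OF v])
        moreover have "\<bar>ps (i, l) - p0 (i, l)\<bar> \<le> r" by (rule psr[OF v])
        ultimately show ?thesis using r\<mu> \<mu>0 by (simp add: abs_le_iff; linarith)
      qed
      have sup': "support N \<sigma>' i = S i" if i: "i < n" for i
        unfolding support_def \<sigma>'_def using S_lt[OF i] pspos[OF i] by force
      have Fp': "charf n S u' p' d = E d" if "d \<in> I" for d
        using charf_cong[OF that p'eq] Fps[OF that] by simp
      have box': "\<forall>v\<in>I. \<bar>p' v - p0 v\<bar> \<le> r \<and> \<bar>p0 v\<bar> \<le> 1" using p'eq psr p0b by simp
      have zero': "\<forall>j<n. j \<noteq> i \<longrightarrow> (\<forall>l<N j. l \<notin> S j \<longrightarrow> \<sigma>' j l = 0)" for i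
        unfolding \<sigma>'_def by simp
      have facts: "mixed N i (\<sigma>' i) \<and> (\<forall>\<tau>. mixed N i \<tau> \<longrightarrow> eu n N u' i (\<sigma>'(i := \<tau>)) \<le> eu n N u' i \<sigma>')
          \<and> eu n N u' i \<sigma>' - eu n N u i \<sigma> < \<epsilon>" if i: "i < n" for i
      proof -
        define a1 where "a1 = ref_act S i"
        have a1S: "a1 \<in> S i" unfolding a1_def by (rule ref_in[OF Sne[OF i]])
        have a1I: "(i, a1) \<in> I" using a1S i unfolding var_idx_def by simp
        let ?U' = "\<lambda>k. upart n S u' i k p'"
        have sum1: "(\<Sum>l\<in>S i. \<sigma>' i l) = 1"
        proof -
          have "charf n S u' p' (i, a1) = (\<Sum>l\<in>S i. \<sigma>' i l)" unfolding charf_def a1_def p'_def by simp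
          then show ?thesis using Fp'[OF a1I] Eref[OF i] unfolding a1_def by simp
        qed
        have Ueq: "?U' k = ?U' a1" if k: "k \<in> S i" for k
        proof (cases "k = a1")
          case False
          have kI: "(i, k) \<in> I" using k i unfolding var_idx_def by simp
          have "charf n S u' p' (i, k) = ?U' a1 - ?U' k" unfolding charf_def a1_def using False a1_def by simp
          then show ?thesis using Fp'[OF kI] Eoth[OF i k] False unfolding a1_def by simp
        qed simp
        have close': "\<bar>?U' a - upart n S u i a p0\<bar> \<le> K2 * (r + \<delta>)" if a: "a < N i" for a
        proof -
          have "\<bar>?U' a - upart n S u i a p0\<bar> \<le> P * \<delta> * 2 ^ n + Wu * (C1 * r)"
            unfolding P_def Wu_def C1_def
            by (rule R1_est[OF i a box']) (use r0 r1 \<delta>0 close in auto)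
          also have "\<dots> \<le> K2 * (r + \<delta>)" unfolding K2_def
            by (rule arith2) (use Wu0 P0 C10 r0 \<delta>0 in auto)
          finally show ?thesis .
        qed
        have a1N: "a1 < N i" using S_lt[OF i a1S] .
        have Ule: "?U' k \<le> ?U' a1" if k: "k < N i" for k
        proof (cases "k \<in> S i")
          case True then show ?thesis using Ueq by simp
        next
          case False
          have "\<rho> \<le> upart n S u i a1 p0 - upart n S u i k p0" unfolding a1_def by (rule \<rho>le[OF i k False])
          moreover have "\<bar>?U' a1 - upart n S u i a1 p0\<bar> \<le> \<rho> / 4" using close'[OF a1N] A2 by linarith
          moreover have "\<bar>?U' k - upart n S u i k p0\<bar> \<le> \<rho> / 4" using close'[OF k] A2 by linarith
          ultimately show ?thesis using \<rho>0 by (simp add: abs_le_iff; linarith)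
        qed
        have nn': "\<forall>l<N i. 0 \<le> \<sigma>' i l" unfolding \<sigma>'_def using pspos[OF i] by (simp add: less_imp_le)
        have sumN: "(\<Sum>l<N i. \<sigma>' i l) = 1"
        proof -
          have "(\<Sum>l<N i. \<sigma>' i l) = (\<Sum>l\<in>S i. \<sigma>' i l)"
            by (rule sum.mono_neutral_right) (use S_sub[OF i] in \<open>auto simp: \<sigma>'_def\<close>)
          then show ?thesis using sum1 by simp
        qed
        have mix: "mixed N i (\<sigma>' i)" unfolding mixed_def using nn' sumN by simp
        have dev: "eu n N u' i (\<sigma>'(i := \<tau>)) = (\<Sum>k<N i. \<tau> k * ?U' k)" for \<tau>
          unfolding p'_def by (rule eu_dev[OF i zero'])
        have euself: "eu n N u' i \<sigma>' = ?U' a1"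
        proof -
          have "eu n N u' i \<sigma>' = (\<Sum>k<N i. \<sigma>' i k * ?U' k)" using dev[of "\<sigma>' i"] by simp
          also have "\<dots> = (\<Sum>k<N i. \<sigma>' i k * ?U' a1)"
            by (rule sum.cong[OF refl]) (auto simp: \<sigma>'_def Ueq)
          also have "\<dots> = ?U' a1" using sumN by (simp add: sum_distrib_right[symmetric])
          finally show ?thesis .
        qed
        have devle: "eu n N u' i (\<sigma>'(i := \<tau>)) \<le> eu n N u' i \<sigma>'" if t: "mixed N i \<tau>" for \<tau>
        proof -
          have "eu n N u' i (\<sigma>'(i := \<tau>)) = (\<Sum>k<N i. \<tau> k * ?U' k)" by (rule dev)
          also have "\<dots> \<le> (\<Sum>k<N i. \<tau> k * ?U' a1)"
            by (rule sum_mono) (use t Ule in \<open>auto simp: mixed_def intro: mult_left_mono\<close>)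
          also have "\<dots> = ?U' a1" using t unfolding mixed_def by (simp add: sum_distrib_right[symmetric])
          finally show ?thesis using euself by simp
        qed
        have pay: "eu n N u' i \<sigma>' - eu n N u i \<sigma> < \<epsilon>"
        proof -
          have "eu n N u i \<sigma> = upart n S u i a1 p0" using eqU[OF i] a1S by simp
          then have "eu n N u' i \<sigma>' - eu n N u i \<sigma> \<le> K2 * (r + \<delta>)" using euself close'[OF a1N] by (simp add: abs_le_iff)
          then show ?thesis using A3 \<epsilon> by linarith
        qed
        show ?thesis using mix devle pay by blast
      qed
      show ?thesis
      proof (intro exI[of _ \<sigma>'] conjI allI impI)
        show "nash n N u' \<sigma>'" unfolding nash_def using facts by blast
        show "support N \<sigma>' i = support N \<sigma> i" if "i < n" for i using sup'[OF that] unfolding S_def by simp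
        show "eu n N u' i \<sigma>' - eu n N u i \<sigma> < \<epsilon>" if "i < n" for i using facts[OF that] by blast
      qed
    qed
  qed
qed

theorem theorem1:
  fixes n :: nat and N :: "nat \<Rightarrow> nat"
    and u :: "nat \<Rightarrow> (nat \<Rightarrow> nat) \<Rightarrow> real" and \<sigma> :: "nat \<Rightarrow> nat \<Rightarrow> real"
  assumes "nash n N u \<sigma>" and "nondegenerate n N u \<sigma>"
  shows "\<forall>\<epsilon>>0. \<exists>\<delta>>0. \<forall>u'. game_dist n N u u' < \<delta> \<longrightarrow>
           (\<exists>\<sigma>'. nash n N u' \<sigma>' \<and> (\<forall>i<n. support N \<sigma>' i = support N \<sigma> i) \<and>
                 (\<forall>i<n. eu n N u' i \<sigma>' - eu n N u i \<sigma> < \<epsilon>))"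
proof (intro allI impI)
  fix \<epsilon> :: real assume \<epsilon>: "0 < \<epsilon>"
  show "\<exists>\<delta>>0. \<forall>u'. game_dist n N u u' < \<delta> \<longrightarrow>
           (\<exists>\<sigma>'. nash n N u' \<sigma>' \<and> (\<forall>i<n. support N \<sigma>' i = support N \<sigma> i) \<and>
                 (\<forall>i<n. eu n N u' i \<sigma>' - eu n N u i \<sigma> < \<epsilon>))"
  proof (cases "n = 0")
    case True
    show ?thesis using True by (intro exI[of _ 1]) (auto simp: nash_def)
  next
    case False
    then show ?thesis using main_pos[OF assms _ \<epsilon>] by simp
  qed
qed

end
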